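(* Let $p$ be a prime and let $A_p$ be a non-zero $p$-primary Abelian group. Then $\mathrm{End}\,A_p$ is centrally essential if and only if $A_p\cong Z_{p^k}$ for some positive integer $k$ or $A_p\cong Z_{p^\infty}$.
   Context: All rings are associative with non-zero identity. A ring $R$ is centrally essential if for every non-zero $a\in R$ there exist non-zero elements $x,y$ of the center of $R$ with $ax=y$. $Z_{p^k}$ is the cyclic group of order $p^k$ and $Z_{p^\infty}$ is the quasi-cyclic (Prüfer) $p$-group. *)

theory Defs
  imports "HOL-Algebra.Algebra" Complex_Main
begin

definition ring_center :: "('a, 'm) ring_scheme \<Rightarrow> 'a set" where
  "ring_center R = {z \<in> carrier R. \<forall>r \<in> carrier R. z \<otimes>\<^bsub>R\<^esub> r = r \<otimes>\<^bsub>R\<^esub> z}"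

definition centrally_essential :: "('a, 'm) ring_scheme \<Rightarrow> bool" where
  "centrally_essential R \<longleftrightarrow>
     (\<forall>a \<in> carrier R. a \<noteq> \<zero>\<^bsub>R\<^esub> \<longrightarrow>
        (\<exists>x \<in> ring_center R. \<exists>y \<in> ring_center R.
            x \<noteq> \<zero>\<^bsub>R\<^esub> \<and> y \<noteq> \<zero>\<^bsub>R\<^esub> \<and> a \<otimes>\<^bsub>R\<^esub> x = y))"

definition End_ring :: "('a, 'm) monoid_scheme \<Rightarrow> ('a \<Rightarrow> 'a) ring" where
  "End_ring G =
     \<lparr>carrier = {f. f \<in> hom G G \<and> f \<in> extensional (carrier G)},
      monoid.mult = (\<lambda>f g. compose (carrier G) f g),
      one = (\<lambda>x\<in>carrier G. x),
      ring.zero = (\<lambda>x\<in>carrier G. \<one>\<^bsub>G\<^esub>),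
      ring.add = (\<lambda>f g. \<lambda>x\<in>carrier G. f x \<otimes>\<^bsub>G\<^esub> g x)\<rparr>"

text \<open>The quasi-cyclic (Pruefer) p-group, modelled as the multiplicative group of
  complex roots of unity of p-power order.\<close>
definition pruefer_group :: "nat \<Rightarrow> complex monoid" where
  "pruefer_group p = \<lparr>carrier = {z. \<exists>n::nat. z ^ (p ^ n) = 1}, monoid.mult = (*), one = 1\<rparr>"

end

theory Submission
  imports Defs
begin

context comm_group begin

definition pmap :: "('a \<times> 'a) set \<Rightarrow> bool" where
  "pmap \<Gamma> \<longleftrightarrow> \<Gamma> \<subseteq> carrier G \<times> carrier G \<and> (\<one>,\<one>) \<in> \<Gamma>
     \<and> (\<forall>a x b y. (a,x) \<in> \<Gamma> \<longrightarrow> (b,y) \<in> \<Gamma> \<longrightarrow> (a \<otimes> b, x \<otimes> y) \<in> \<Gamma>)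
     \<and> (\<forall>a x. (a,x) \<in> \<Gamma> \<longrightarrow> (inv a, inv x) \<in> \<Gamma>)
     \<and> (\<forall>a x y. (a,x) \<in> \<Gamma> \<longrightarrow> (a,y) \<in> \<Gamma> \<longrightarrow> x = y)"

definition pdom :: "('a \<times> 'a) set \<Rightarrow> 'a set" where
  "pdom \<Gamma> = {k. \<exists>y. (k,y) \<in> \<Gamma>}"

lemma pmap_carrier: "pmap \<Gamma> \<Longrightarrow> (a,x) \<in> \<Gamma> \<Longrightarrow> a \<in> carrier G \<and> x \<in> carrier G"
  unfolding pmap_def by blast

lemma pmap_mult: "pmap \<Gamma> \<Longrightarrow> (a,x) \<in> \<Gamma> \<Longrightarrow> (b,y) \<in> \<Gamma> \<Longrightarrow> (a \<otimes> b, x \<otimes> y) \<in> \<Gamma>"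
  unfolding pmap_def by blast

lemma pmap_inv: "pmap \<Gamma> \<Longrightarrow> (a,x) \<in> \<Gamma> \<Longrightarrow> (inv a, inv x) \<in> \<Gamma>"
  unfolding pmap_def by blast

lemma pmap_one: "pmap \<Gamma> \<Longrightarrow> (\<one>,\<one>) \<in> \<Gamma>"
  unfolding pmap_def by blast

lemma pmap_fun: "pmap \<Gamma> \<Longrightarrow> (a,x) \<in> \<Gamma> \<Longrightarrow> (a,y) \<in> \<Gamma> \<Longrightarrow> x = y"
  unfolding pmap_def by blast

lemma pmap_natpow: "pmap \<Gamma> \<Longrightarrow> (a,x) \<in> \<Gamma> \<Longrightarrow> (a [^] (n::nat), x [^] n) \<in> \<Gamma>"
proof (induction n)
  case 0 then show ?case using pmap_one by simp
next
  case (Suc n) then show ?case using pmap_mult[of \<Gamma> "a [^] n" "x [^] n" a x] by simp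
qed

lemma pmap_pow: "pmap \<Gamma> \<Longrightarrow> (a,x) \<in> \<Gamma> \<Longrightarrow> (a [^] (i::int), x [^] i) \<in> \<Gamma>"
  unfolding int_pow_def2 by (simp del: pow_nat add: pmap_inv pmap_natpow)

lemma pmap_chain:
  assumes "C \<noteq> {}" "\<And>\<Gamma>. \<Gamma> \<in> C \<Longrightarrow> pmap \<Gamma>"
    and ch: "\<And>A B. A \<in> C \<Longrightarrow> B \<in> C \<Longrightarrow> A \<subseteq> B \<or> B \<subseteq> A"
  shows "pmap (\<Union>C)"
proof -
  obtain \<Gamma>0 where g0: "\<Gamma>0 \<in> C" using assms(1) by blast
  have 1: "\<Union>C \<subseteq> carrier G \<times> carrier G"
  proof
    fix z assume "z \<in> \<Union>C"
    then obtain A where "A \<in> C" "z \<in> A" by blast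
    then show "z \<in> carrier G \<times> carrier G" using assms(2)[of A] pmap_carrier[of A "fst z" "snd z"] by (auto simp: mem_Times_iff)
  qed
  have 2: "(\<one>,\<one>) \<in> \<Union>C" using g0 assms(2)[OF g0] pmap_one by blast
  have 3: "(a \<otimes> b, x \<otimes> y) \<in> \<Union>C" if h: "(a,x) \<in> \<Union>C" "(b,y) \<in> \<Union>C" for a x b y
  proof -
    obtain A B where AB: "A \<in> C" "B \<in> C" "(a,x) \<in> A" "(b,y) \<in> B" using h by blast
    show ?thesis
    proof (cases "A \<subseteq> B")
      case True
      then have "(a \<otimes> b, x \<otimes> y) \<in> B" using AB assms(2)[of B] pmap_mult[of B a x b y] by blast
      then show ?thesis using AB by blast
    next
      case False
      then have "B \<subseteq> A" using ch AB by blast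
      then have "(a \<otimes> b, x \<otimes> y) \<in> A" using AB assms(2)[of A] pmap_mult[of A a x b y] by blast
      then show ?thesis using AB by blast
    qed
  qed
  have 4: "(inv a, inv x) \<in> \<Union>C" if h: "(a,x) \<in> \<Union>C" for a x
  proof -
    obtain A where A: "A \<in> C" "(a,x) \<in> A" using h by blast
    then have "(inv a, inv x) \<in> A" using assms(2)[of A] pmap_inv[of A a x] by blast
    then show ?thesis using A by blast
  qed
  have 5: "x = y" if h: "(a,x) \<in> \<Union>C" "(a,y) \<in> \<Union>C" for a x y
  proof -
    obtain A B where AB: "A \<in> C" "B \<in> C" "(a,x) \<in> A" "(a,y) \<in> B" using h by blast
    show ?thesis
    proof (cases "A \<subseteq> B")
      case True
      then show ?thesis using AB assms(2)[of B] pmap_fun[of B a x y] by blast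
    next
      case False
      then have "B \<subseteq> A" using ch AB by blast
      then show ?thesis using AB assms(2)[of A] pmap_fun[of A a x y] by blast
    qed
  qed
  show ?thesis unfolding pmap_def using 1 2 3 4 5 by blast
qed

lemma pmap_total_hom:
  assumes "pmap \<Gamma>" "\<And>x. x \<in> carrier G \<Longrightarrow> x \<in> pdom \<Gamma>"
  defines "f \<equiv> \<lambda>x. THE y. (x,y) \<in> \<Gamma>"
  shows "f \<in> hom G G" "\<And>x. x \<in> carrier G \<Longrightarrow> (x, f x) \<in> \<Gamma>"
proof -
  have fx: "(x, f x) \<in> \<Gamma>" if hx: "x \<in> carrier G" for x
  proof -
    obtain y where "(x,y) \<in> \<Gamma>" using assms(2)[OF hx] pdom_def by blast
    then show ?thesis unfolding f_def
      by (rule theI[of _ y]) (use \<open>(x,y) \<in> \<Gamma>\<close> assms(1) pmap_fun in blast)+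
  qed
  then show "\<And>x. x \<in> carrier G \<Longrightarrow> (x, f x) \<in> \<Gamma>" .
  show "f \<in> hom G G"
  proof (rule homI)
    fix x assume "x \<in> carrier G" then show "f x \<in> carrier G"
      using fx assms(1) pmap_carrier by blast
  next
    fix x y assume xy: "x \<in> carrier G" "y \<in> carrier G"
    have "(x \<otimes> y, f x \<otimes> f y) \<in> \<Gamma>" using fx xy pmap_mult assms(1) by blast
    moreover have "(x \<otimes> y, f (x \<otimes> y)) \<in> \<Gamma>" using fx xy by simp
    ultimately show "f (x \<otimes> y) = f x \<otimes> f y" using pmap_fun assms(1) by blast
  qed
qed

lemma zorn_ext:
  assumes p0: "pmap \<Gamma>0" and q0: "\<And>k y. (k,y) \<in> \<Gamma>0 \<Longrightarrow> Q k y"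
    and step: "\<And>\<Gamma>. pmap \<Gamma> \<Longrightarrow> \<Gamma>0 \<subseteq> \<Gamma> \<Longrightarrow> (\<forall>k y. (k,y) \<in> \<Gamma> \<longrightarrow> Q k y)
       \<Longrightarrow> pdom \<Gamma> \<noteq> carrier G
       \<Longrightarrow> \<exists>\<Gamma>'. pmap \<Gamma>' \<and> \<Gamma> \<subset> \<Gamma>' \<and> (\<forall>k y. (k,y) \<in> \<Gamma>' \<longrightarrow> Q k y)"
  shows "\<exists>f \<in> hom G G. (\<forall>x \<in> carrier G. Q x (f x)) \<and> (\<forall>k y. (k,y) \<in> \<Gamma>0 \<longrightarrow> f k = y)"
proof -
  define AA where "AA = {\<Gamma>. pmap \<Gamma> \<and> \<Gamma>0 \<subseteq> \<Gamma> \<and> (\<forall>k y. (k,y) \<in> \<Gamma> \<longrightarrow> Q k y)}"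
  have AAI: "\<Gamma> \<in> AA \<longleftrightarrow> pmap \<Gamma> \<and> \<Gamma>0 \<subseteq> \<Gamma> \<and> (\<forall>k y. (k,y) \<in> \<Gamma> \<longrightarrow> Q k y)" for \<Gamma>
    by (simp add: AA_def)
  have "\<exists>Mx\<in>AA. \<forall>Y\<in>AA. Mx \<subseteq> Y \<longrightarrow> Y = Mx"
  proof (rule subset_Zorn_nonempty)
    have "\<Gamma>0 \<in> AA" using p0 q0 AAI by blast
    then show "AA \<noteq> {}" by blast
  next
    fix CC assume C: "CC \<noteq> {}" "subset.chain AA CC"
    then have sub: "CC \<subseteq> AA" and ch: "\<And>A B. A \<in> CC \<Longrightarrow> B \<in> CC \<Longrightarrow> A \<subseteq> B \<or> B \<subseteq> A"
      by (auto simp: subset.chain_def)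
    have pm: "\<And>\<Gamma>. \<Gamma> \<in> CC \<Longrightarrow> pmap \<Gamma>" using sub AAI by blast
    have "pmap (\<Union>CC)" using pmap_chain[OF C(1) pm ch] by blast
    moreover obtain A where "A \<in> CC" using C(1) by blast
    then have "\<Gamma>0 \<subseteq> \<Union>CC" using sub AAI by blast
    moreover have "\<forall>k y. (k,y) \<in> \<Union>CC \<longrightarrow> Q k y"
    proof (intro allI impI)
      fix k y assume "(k,y) \<in> \<Union>CC"
      then obtain B where "B \<in> CC" "(k,y) \<in> B" by blast
      then show "Q k y" using sub AAI by blast
    qed
    ultimately show "\<Union>CC \<in> AA" using AAI by blast
  qed
  then obtain M where M: "M \<in> AA" "\<And>Y. Y \<in> AA \<Longrightarrow> M \<subseteq> Y \<Longrightarrow> Y = M" by blast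
  have MM: "pmap M" "\<Gamma>0 \<subseteq> M" "\<forall>k y. (k,y) \<in> M \<longrightarrow> Q k y" using M(1) AAI by auto
  have "pdom M = carrier G"
  proof (rule ccontr)
    assume "pdom M \<noteq> carrier G"
    then obtain \<Gamma>' where G': "pmap \<Gamma>'" "M \<subset> \<Gamma>'" "\<forall>k y. (k,y) \<in> \<Gamma>' \<longrightarrow> Q k y"
      using step[OF MM] by blast
    then have "\<Gamma>' \<in> AA" using MM(2) AAI by blast
    then have "\<Gamma>' = M" using M(2) G'(2) by blast
    then show False using G'(2) by blast
  qed
  then have pM: "\<And>x. x \<in> carrier G \<Longrightarrow> x \<in> pdom M" by blast
  define f where "f \<equiv> \<lambda>x. THE y. (x,y) \<in> M"
  have fh: "f \<in> hom G G" and fx: "\<And>x. x \<in> carrier G \<Longrightarrow> (x, f x) \<in> M"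
    using pmap_total_hom[OF MM(1) pM] f_def by auto
  show ?thesis
  proof (intro bexI conjI ballI allI impI)
    show "f \<in> hom G G" by (rule fh)
  next
    fix x assume "x \<in> carrier G" then show "Q x (f x)" using fx MM(3) by blast
  next
    fix k y assume ky: "(k,y) \<in> \<Gamma>0"
    then have "(k,y) \<in> M" using MM(2) by blast
    moreover have "k \<in> carrier G" using ky p0 pmap_carrier by blast
    ultimately show "f k = y" using fx pmap_fun[OF MM(1)] by blast
  qed
qed

end

context comm_group begin

lemma eq_shift:
  assumes "a \<in> carrier G" "b \<in> carrier G" "c \<in> carrier G" "d \<in> carrier G"
  shows "a \<otimes> b = c \<otimes> d \<longleftrightarrow> inv a \<otimes> c = b \<otimes> inv d"
proof
  assume h: "a \<otimes> b = c \<otimes> d"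
  have "inv a \<otimes> c = inv a \<otimes> (c \<otimes> d) \<otimes> inv d" using assms by (simp add: m_assoc)
  also have "\<dots> = inv a \<otimes> (a \<otimes> b) \<otimes> inv d" using h by simp
  also have "\<dots> = b \<otimes> inv d" using assms by (simp add: m_assoc[symmetric])
  finally show "inv a \<otimes> c = b \<otimes> inv d" .
next
  assume h: "inv a \<otimes> c = b \<otimes> inv d"
  have "a \<otimes> b = a \<otimes> (b \<otimes> inv d) \<otimes> d" using assms by (simp add: m_assoc)
  also have "\<dots> = a \<otimes> (inv a \<otimes> c) \<otimes> d" using h by simp
  also have "\<dots> = c \<otimes> d" using assms by (simp add: m_assoc[symmetric])
  finally show "a \<otimes> b = c \<otimes> d" .
qed

lemma mult4: "a \<in> carrier G \<Longrightarrow> b \<in> carrier G \<Longrightarrow> c \<in> carrier G \<Longrightarrow> d \<in> carrier G \<Longrightarrow>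
  (a \<otimes> b) \<otimes> (c \<otimes> d) = (a \<otimes> c) \<otimes> (b \<otimes> d)"
  by (simp add: m_ac)

lemma inv_mult_comm: "a \<in> carrier G \<Longrightarrow> b \<in> carrier G \<Longrightarrow> inv (a \<otimes> b) = inv a \<otimes> inv b"
  by (simp add: inv_mult_group m_comm)

lemma pdom_one: "pmap \<Gamma> \<Longrightarrow> \<one> \<in> pdom \<Gamma>"
  using pmap_one pdom_def by blast
lemma pdom_mult: "pmap \<Gamma> \<Longrightarrow> a \<in> pdom \<Gamma> \<Longrightarrow> b \<in> pdom \<Gamma> \<Longrightarrow> a \<otimes> b \<in> pdom \<Gamma>"
  unfolding pdom_def using pmap_mult by blast
lemma pdom_inv: "pmap \<Gamma> \<Longrightarrow> a \<in> pdom \<Gamma> \<Longrightarrow> inv a \<in> pdom \<Gamma>"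
  unfolding pdom_def using pmap_inv by blast
lemma pdom_pow: "pmap \<Gamma> \<Longrightarrow> a \<in> pdom \<Gamma> \<Longrightarrow> a [^] (i::int) \<in> pdom \<Gamma>"
  unfolding pdom_def using pmap_pow by blast
lemma pdom_carrier: "pmap \<Gamma> \<Longrightarrow> a \<in> pdom \<Gamma> \<Longrightarrow> a \<in> carrier G"
  unfolding pdom_def using pmap_carrier by blast

definition pext :: "('a \<times> 'a) set \<Rightarrow> 'a \<Rightarrow> 'a \<Rightarrow> ('a \<times> 'a) set" where
  "pext \<Gamma> x d = {z. \<exists>k a (i::int). (k,a) \<in> \<Gamma> \<and> z = (k \<otimes> x [^] i, a \<otimes> d [^] i)}"

lemma pext:
  assumes pm: "pmap \<Gamma>" and x: "x \<in> carrier G" and d: "d \<in> carrier G"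
    and dv: "\<And>i::int. x [^] i \<in> pdom \<Gamma> \<Longrightarrow> int m dvd i"
    and xm: "(x [^] (int m), d [^] (int m)) \<in> \<Gamma>"
  shows "pmap (pext \<Gamma> x d)" "\<Gamma> \<subseteq> pext \<Gamma> x d" "(x,d) \<in> pext \<Gamma> x d"
proof -
  have cG: "k \<in> carrier G \<and> a \<in> carrier G" if "(k,a) \<in> \<Gamma>" for k a
    using pmap_carrier[OF pm that] .
  show sub: "\<Gamma> \<subseteq> pext \<Gamma> x d"
  proof
    fix z assume z: "z \<in> \<Gamma>"
    obtain k a where "z = (k,a)" by fastforce
    have "(k,a) \<in> \<Gamma>" using z \<open>z = (k,a)\<close> by simp
    have "z = (k \<otimes> x [^] (0::int), a \<otimes> d [^] (0::int))" using cG[OF \<open>(k,a) \<in> \<Gamma>\<close>] \<open>z = (k,a)\<close> by simp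
    then show "z \<in> pext \<Gamma> x d" unfolding pext_def using \<open>(k,a) \<in> \<Gamma>\<close> by blast
  qed
  show "(x,d) \<in> pext \<Gamma> x d"
  proof -
    have "(x,d) = (\<one> \<otimes> x [^] (1::int), \<one> \<otimes> d [^] (1::int))" using x d by simp
    then show ?thesis unfolding pext_def using pmap_one[OF pm] by blast
  qed
  show "pmap (pext \<Gamma> x d)" unfolding pmap_def
  proof (intro conjI allI impI)
    show "pext \<Gamma> x d \<subseteq> carrier G \<times> carrier G"
      unfolding pext_def using cG x d by auto
    show "(\<one>,\<one>) \<in> pext \<Gamma> x d" using sub pmap_one[OF pm] by blast
  next
    fix b1 y1 b2 y2 assume h1: "(b1,y1) \<in> pext \<Gamma> x d" and h2: "(b2,y2) \<in> pext \<Gamma> x d"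
    obtain k1 a1 i1 where e1: "(k1,a1) \<in> \<Gamma>" "b1 = k1 \<otimes> x [^] i1" "y1 = a1 \<otimes> d [^] (i1::int)"
      using h1 unfolding pext_def by blast
    obtain k2 a2 i2 where e2: "(k2,a2) \<in> \<Gamma>" "b2 = k2 \<otimes> x [^] i2" "y2 = a2 \<otimes> d [^] (i2::int)"
      using h2 unfolding pext_def by blast
    have "(k1 \<otimes> k2, a1 \<otimes> a2) \<in> \<Gamma>" using pmap_mult[OF pm e1(1) e2(1)] .
    moreover have "b1 \<otimes> b2 = (k1 \<otimes> k2) \<otimes> x [^] (i1 + i2)"
      using e1 e2 cG x by (simp add: mult4 int_pow_mult)
    moreover have "y1 \<otimes> y2 = (a1 \<otimes> a2) \<otimes> d [^] (i1 + i2)"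
      using e1 e2 cG d by (simp add: mult4 int_pow_mult)
    ultimately show "(b1 \<otimes> b2, y1 \<otimes> y2) \<in> pext \<Gamma> x d" unfolding pext_def by blast
  next
    fix b1 y1 assume h1: "(b1,y1) \<in> pext \<Gamma> x d"
    obtain k1 a1 i1 where e1: "(k1,a1) \<in> \<Gamma>" "b1 = k1 \<otimes> x [^] i1" "y1 = a1 \<otimes> d [^] (i1::int)"
      using h1 unfolding pext_def by blast
    have "(inv k1, inv a1) \<in> \<Gamma>" using pmap_inv[OF pm e1(1)] .
    moreover have "inv b1 = inv k1 \<otimes> x [^] (- i1)"
      using e1 cG x by (simp add: inv_mult_comm int_pow_neg)
    moreover have "inv y1 = inv a1 \<otimes> d [^] (- i1)"
      using e1 cG d by (simp add: inv_mult_comm int_pow_neg)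
    ultimately show "(inv b1, inv y1) \<in> pext \<Gamma> x d" unfolding pext_def by blast
  next
    fix b1 y1 y2 assume h1: "(b1,y1) \<in> pext \<Gamma> x d" and h2: "(b1,y2) \<in> pext \<Gamma> x d"
    obtain k1 a1 i1 where e1: "(k1,a1) \<in> \<Gamma>" "b1 = k1 \<otimes> x [^] i1" "y1 = a1 \<otimes> d [^] (i1::int)"
      using h1 unfolding pext_def by blast
    obtain k2 a2 i2 where e2: "(k2,a2) \<in> \<Gamma>" "b1 = k2 \<otimes> x [^] i2" "y2 = a2 \<otimes> d [^] (i2::int)"
      using h2 unfolding pext_def by blast
    have c: "k1 \<in> carrier G" "a1 \<in> carrier G" "k2 \<in> carrier G" "a2 \<in> carrier G"
      using cG e1(1) e2(1) by auto
    have "inv k1 \<otimes> k2 = x [^] i1 \<otimes> inv (x [^] i2)"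
      using e1(2) e2(2) eq_shift[of k1 "x [^] i1" k2 "x [^] i2"] c x by simp
    also have "\<dots> = x [^] (i1 - i2)" using x by (simp add: int_pow_diff)
    finally have kk: "inv k1 \<otimes> k2 = x [^] (i1 - i2)" .
    have g1: "(inv k1 \<otimes> k2, inv a1 \<otimes> a2) \<in> \<Gamma>"
      using pmap_mult[OF pm pmap_inv[OF pm e1(1)] e2(1)] .
    then have "x [^] (i1 - i2) \<in> pdom \<Gamma>" using kk pdom_def by auto
    then obtain t where t: "i1 - i2 = int m * t" using dv by (meson dvdE)
    have "((x [^] (int m)) [^] t, (d [^] (int m)) [^] t) \<in> \<Gamma>" using pmap_pow[OF pm xm] .
    then have "(x [^] (i1 - i2), d [^] (i1 - i2)) \<in> \<Gamma>" using t x d by (simp add: int_pow_pow)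
    then have "inv a1 \<otimes> a2 = d [^] (i1 - i2)" using g1 kk pmap_fun[OF pm] by metis
    also have "\<dots> = d [^] i1 \<otimes> inv (d [^] i2)" using d by (simp add: int_pow_diff)
    finally have "a1 \<otimes> d [^] i1 = a2 \<otimes> d [^] i2"
      using eq_shift[of a1 "d [^] i1" a2 "d [^] i2"] c d by simp
    then show "y1 = y2" using e1 e2 by simp
  qed
qed

lemma min_exp:
  assumes pm: "pmap \<Gamma>" and x: "x \<in> carrier G" and n: "n > 0" "x [^] (n::nat) = \<one>"
  shows "\<exists>m>0. (\<forall>i::int. x [^] i \<in> pdom \<Gamma> \<longleftrightarrow> int m dvd i) \<and> m dvd n"
proof -
  define S where "S = {m::nat. m > 0 \<and> x [^] (int m) \<in> pdom \<Gamma>}"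
  have nS: "n \<in> S" using n pdom_one[OF pm] S_def by (simp add: int_pow_int)
  define m where "m = (LEAST m. m \<in> S)"
  have mS: "m \<in> S" using nS m_def by (metis LeastI)
  have mle: "\<And>k. k \<in> S \<Longrightarrow> m \<le> k" using m_def by (simp add: Least_le)
  have m0: "m > 0" and xm: "x [^] (int m) \<in> pdom \<Gamma>" using mS S_def by auto
  have key: "x [^] i \<in> pdom \<Gamma> \<longleftrightarrow> int m dvd i" for i :: int
  proof
    assume xi: "x [^] i \<in> pdom \<Gamma>"
    have "i = int m * (i div int m) + i mod int m" by simp
    then have "x [^] i = x [^] (int m * (i div int m)) \<otimes> x [^] (i mod int m)"
      using x by (metis int_pow_mult)
    then have "x [^] (i mod int m) = inv (x [^] (int m * (i div int m))) \<otimes> x [^] i"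
      using x by (simp add: inv_solve_left)
    also have "\<dots> \<in> pdom \<Gamma>"
      using pdom_mult[OF pm pdom_inv[OF pm pdom_pow[OF pm xm]] xi] x by (simp add: int_pow_pow)
    finally have r: "x [^] (i mod int m) \<in> pdom \<Gamma>" .
    show "int m dvd i"
    proof (rule ccontr)
      assume "\<not> int m dvd i"
      then have pos: "i mod int m > 0" using m0
        by (metis dvd_eq_mod_eq_0 mod_int_pos_iff of_nat_0_less_iff order_le_less)
      then have "nat (i mod int m) \<in> S" using r S_def by simp
      then have "m \<le> nat (i mod int m)" using mle by blast
      moreover have "i mod int m < int m" using m0 by simp
      ultimately show False using pos by linarith
    qed
  next
    assume "int m dvd i"
    then obtain t where "i = int m * t" by (meson dvdE)
    then show "x [^] i \<in> pdom \<Gamma>" using pdom_pow[OF pm xm, of t] x by (simp add: int_pow_pow)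
  qed
  have "int m dvd int n" using key[of "int n"] nS S_def by simp
  then show ?thesis using key m0 by auto
qed

end

context comm_group begin

lemma hom_one': "f \<in> hom G G \<Longrightarrow> f \<one> = \<one>"
  by (metis group_hom.hom_one group_hom_axioms_def group_hom_def is_group)

lemma hom_inv': "f \<in> hom G G \<Longrightarrow> x \<in> carrier G \<Longrightarrow> f (inv x) = inv (f x)"
  by (metis group_hom.hom_inv group_hom_axioms_def group_hom_def is_group)

lemma hom_in: "f \<in> hom G G \<Longrightarrow> x \<in> carrier G \<Longrightarrow> f x \<in> carrier G"
  by (simp add: hom_in_carrier)

lemma hom_mult': "f \<in> hom G G \<Longrightarrow> x \<in> carrier G \<Longrightarrow> y \<in> carrier G \<Longrightarrow> f (x \<otimes> y) = f x \<otimes> f y"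
  by (simp add: hom_mult)

lemma End_carrier: "f \<in> carrier (End_ring G) \<longleftrightarrow> f \<in> hom G G \<and> f \<in> extensional (carrier G)"
  by (simp add: End_ring_def)

lemma End_mult: "f \<otimes>\<^bsub>End_ring G\<^esub> g = compose (carrier G) f g"
  by (simp add: End_ring_def)

lemma End_zero: "\<zero>\<^bsub>End_ring G\<^esub> = (\<lambda>x\<in>carrier G. \<one>)"
  by (simp add: End_ring_def)

lemma restrict_hom: "f \<in> hom G G \<Longrightarrow> restrict f (carrier G) \<in> carrier (End_ring G)"
  by (simp add: End_carrier hom_def Pi_iff)

lemma div_one_eq:
  assumes "a \<in> carrier G" "b \<in> carrier G" "a \<otimes> inv b = \<one>" shows "a = b"
proof -
  have "a = a \<otimes> (inv b \<otimes> b)" using assms by simp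
  also have "\<dots> = (a \<otimes> inv b) \<otimes> b" by (simp only: m_assoc[OF assms(1) inv_closed[OF assms(2)] assms(2)])
  also have "\<dots> = b" using assms by simp
  finally show ?thesis .
qed

lemma diff_hom: "e \<in> hom G G \<Longrightarrow> (\<lambda>x. x \<otimes> inv (e x)) \<in> hom G G"
proof (rule homI)
  fix x assume "e \<in> hom G G" "x \<in> carrier G" then show "x \<otimes> inv (e x) \<in> carrier G" using hom_in by simp
next
  fix x y assume h: "e \<in> hom G G" "x \<in> carrier G" "y \<in> carrier G"
  then show "x \<otimes> y \<otimes> inv (e (x \<otimes> y)) = x \<otimes> inv (e x) \<otimes> (y \<otimes> inv (e y))"
    using hom_in[OF h(1)] by (simp add: hom_mult' inv_mult_comm m_ac)
qed

lemma idem_kill: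
  assumes CE: "centrally_essential (End_ring G)" and e: "e \<in> hom G G" "\<And>x. x \<in> carrier G \<Longrightarrow> e (e x) = e x"
    and r: "r \<in> hom G G" and z: "z \<in> carrier G"
  shows "e (r (z \<otimes> inv (e z))) = \<one>"
proof -
  define a where "a = (\<lambda>x\<in>carrier G. e (r (x \<otimes> inv (e x))))"
  have ah: "(\<lambda>x. e (r (x \<otimes> inv (e x)))) \<in> hom G G"
    using hom_compose[OF hom_compose[OF diff_hom[OF e(1)] r] e(1)]
    by (rule hom_eq) (simp add: compose_def)
  then have aE: "a \<in> carrier (End_ring G)" unfolding a_def by (rule restrict_hom)
  show ?thesis
  proof (rule ccontr)
    assume ne: "e (r (z \<otimes> inv (e z))) \<noteq> \<one>"
    have "a \<noteq> \<zero>\<^bsub>End_ring G\<^esub>"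
    proof
      assume "a = \<zero>\<^bsub>End_ring G\<^esub>"
      then have "a z = \<one>" using z by (simp add: End_zero)
      then show False using ne z a_def by simp
    qed
    then obtain Xf Yf where XY: "Xf \<in> ring_center (End_ring G)" "Yf \<in> ring_center (End_ring G)"
      "Xf \<noteq> \<zero>\<^bsub>End_ring G\<^esub>" "Yf \<noteq> \<zero>\<^bsub>End_ring G\<^esub>" "a \<otimes>\<^bsub>End_ring G\<^esub> Xf = Yf"
      using CE aE unfolding centrally_essential_def by blast
    define E where "E = restrict e (carrier G)"
    have EE: "E \<in> carrier (End_ring G)" unfolding E_def using e(1) by (rule restrict_hom)
    have XE: "Xf \<in> carrier (End_ring G)" and YE: "Yf \<in> carrier (End_ring G)"
      using XY(1,2) unfolding ring_center_def by auto
    have XC: "compose (carrier G) Xf E = compose (carrier G) E Xf"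
      using XY(1) EE unfolding ring_center_def by (simp add: End_mult)
    have YC: "compose (carrier G) Yf E = compose (carrier G) E Yf"
      using XY(2) EE unfolding ring_center_def by (simp add: End_mult)
    have Xh: "Xf \<in> hom G G" using XE End_carrier by blast
    have Yext: "Yf \<in> extensional (carrier G)" using YE End_carrier by blast
    have Yw: "Yf w = a (Xf w)" if "w \<in> carrier G" for w
      using XY(5) that by (auto simp: End_mult compose_def)
    have Xw: "Xf (e w) = e (Xf w)" if "w \<in> carrier G" for w
      using fun_cong[OF XC, of w] that hom_in[OF e(1)] hom_in[OF Xh] by (simp add: compose_def E_def)
    have 1: "compose (carrier G) Yf E = \<zero>\<^bsub>End_ring G\<^esub>"
    proof (rule ext)
      fix w show "compose (carrier G) Yf E w = \<zero>\<^bsub>End_ring G\<^esub> w"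
      proof (cases "w \<in> carrier G")
        case True
        have ew: "e w \<in> carrier G" "Xf w \<in> carrier G" "e (Xf w) \<in> carrier G"
          using True hom_in[OF e(1)] hom_in[OF Xh] by auto
        have "compose (carrier G) Yf E w = a (Xf (e w))" using True Yw ew by (simp add: compose_def E_def)
        also have "\<dots> = a (e (Xf w))" using Xw True by simp
        also have "\<dots> = e (r (e (Xf w) \<otimes> inv (e (Xf w))))" using ew e(2) a_def by simp
        also have "\<dots> = \<one>" using ew hom_one'[OF r] hom_one'[OF e(1)] by simp
        finally show ?thesis using True by (simp add: End_zero)
      qed (simp add: compose_def End_zero)
    qed
    have 2: "compose (carrier G) E Yf = Yf"
    proof (rule ext)
      fix w show "compose (carrier G) E Yf w = Yf w"
      proof (cases "w \<in> carrier G")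
        case True
        have ew: "Xf w \<in> carrier G" using True hom_in[OF Xh] by auto
        have rr: "r (Xf w \<otimes> inv (e (Xf w))) \<in> carrier G"
          using ew hom_in[OF e(1)] hom_in[OF r] by simp
        have axw: "a (Xf w) \<in> carrier G" using ew rr hom_in[OF e(1)] a_def by simp
        have "compose (carrier G) E Yf w = e (a (Xf w))" using True Yw axw by (simp add: compose_def E_def)
        also have "\<dots> = a (Xf w)" using ew e(2)[OF rr] a_def by simp
        finally show ?thesis using Yw True by simp
      qed (use Yext in \<open>simp add: compose_def extensional_def\<close>)
    qed
    have "Yf = \<zero>\<^bsub>End_ring G\<^esub>" using 1 2 YC by simp
    then show False using XY(4) by simp
  qed
qed

lemma idem_comm:
  assumes CE: "centrally_essential (End_ring G)" and e: "e \<in> hom G G" "\<And>x. x \<in> carrier G \<Longrightarrow> e (e x) = e x"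
    and r: "r \<in> hom G G" and x: "x \<in> carrier G"
  shows "e (r x) = r (e x)"
proof -
  have ex: "e x \<in> carrier G" using hom_in[OF e(1) x] .
  have rex: "r (e x) \<in> carrier G" using hom_in[OF r ex] .
  have erex: "e (r (e x)) \<in> carrier G" using hom_in[OF e(1) rex] .
  have "e (r (x \<otimes> inv (e x))) = \<one>" using idem_kill[OF CE e r x] .
  then have "e (r x) \<otimes> inv (e (r (e x))) = \<one>"
    using x ex hom_in[OF r] hom_in[OF e(1)] by (simp add: hom_mult' hom_inv' e r)
  then have 1: "e (r x) = e (r (e x))"
    using div_one_eq[OF hom_in[OF e(1) hom_in[OF r x]] erex] by blast
  define e' where "e' = (\<lambda>x. x \<otimes> inv (e x))"
  have e'h: "e' \<in> hom G G" unfolding e'_def using diff_hom[OF e(1)] .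
  have e'e: "e' (e' y) = e' y" if "y \<in> carrier G" for y
  proof -
    have "e (y \<otimes> inv (e y)) = \<one>" using that hom_in[OF e(1)] e(2)
      by (simp add: hom_mult' hom_inv' e(1))
    then show ?thesis unfolding e'_def using that hom_in[OF e(1)] by simp
  qed
  have "e' (r (e x \<otimes> inv (e' (e x)))) = \<one>" using idem_kill[OF CE e'h e'e r ex] by blast
  moreover have "e' (e x) = \<one>" unfolding e'_def using ex e(2)[OF x] by simp
  ultimately have "r (e x) \<otimes> inv (e (r (e x))) = \<one>" using ex unfolding e'_def by simp
  then have "r (e x) = e (r (e x))"
    using div_one_eq[OF rex erex] by blast
  then show ?thesis using 1 by simp
qed

end

lemma pmap_triv: "comm_group G \<Longrightarrow> comm_group.pmap G {(\<one>\<^bsub>G\<^esub>, \<one>\<^bsub>G\<^esub>)}"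
  by (simp add: comm_group.pmap_def group.is_monoid comm_group.axioms(2) monoid.inv_one)

locale pgrp = comm_group G for G (structure) +
  fixes p :: nat
  assumes pp: "Factorial_Ring.prime p"
    and ptor: "\<And>x. x \<in> carrier G \<Longrightarrow> \<exists>n::nat. x [^] (p ^ n) = \<one>"
begin

definition cyc :: "'a \<Rightarrow> 'a set" where "cyc x = {y. \<exists>i::int. y = x [^] i}"

lemma p_gt1: "p > 1" using pp prime_gt_1_nat by blast

lemma ord_pp: assumes "x \<in> carrier G" shows "\<exists>j. ord x = p ^ j"
proof -
  obtain n where "x [^] (p ^ n) = \<one>" using ptor assms by blast
  then have "ord x dvd p ^ n" using pow_eq_id assms by blast
  then show ?thesis using divides_primepow_nat[OF pp] by blast
qed

lemma ord_pos: assumes "x \<in> carrier G" shows "ord x > 0"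
  using ord_pp[OF assms] p_gt1 by auto

lemma ord_exact:
  assumes "x \<in> carrier G" "x [^] (p ^ Suc j) = \<one>" "x [^] (p ^ j) \<noteq> \<one>"
  shows "ord x = p ^ Suc j"
proof -
  have "ord x dvd p ^ Suc j" using assms pow_eq_id by blast
  then obtain i where i: "i \<le> Suc j" "ord x = p ^ i" using divides_primepow_nat[OF pp] by blast
  have "i = Suc j"
  proof (rule ccontr)
    assume "i \<noteq> Suc j" then have "i \<le> j" using i by simp
    then have "ord x dvd p ^ j" using i(2) by (simp add: le_imp_power_dvd)
    then show False using assms(3) pow_eq_id assms(1) by blast
  qed
  then show ?thesis using i by simp
qed

lemma ord_p: assumes "x \<in> carrier G" "x [^] p = \<one>" "x \<noteq> \<one>" shows "ord x = p"
  using ord_exact[of x 0] assms by simp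

lemma pow_one_iff: "x \<in> carrier G \<Longrightarrow> x [^] (i::int) = \<one> \<longleftrightarrow> int (ord x) dvd i"
  using int_pow_eq_id by blast

lemma cyc_inv:
  assumes u: "u \<in> carrier G" "u [^] p = \<one>" "u \<noteq> \<one>" and w: "w \<in> carrier G" and uw: "u \<in> cyc w"
    and wp: "w [^] p = \<one>"
  shows "w \<in> cyc u"
proof -
  obtain i where i: "u = w [^] (i::int)" using uw cyc_def by blast
  have wp': "w [^] (int p) = \<one>" using wp by (simp only: int_pow_int)
  have "\<not> int p dvd i"
  proof
    assume "int p dvd i" then obtain t where t: "i = int p * t" by (meson dvdE)
    have "u = (w [^] (int p)) [^] t" using i w t by (simp only: int_pow_pow)
    then show False using wp' u(3) by simp
  qed
  then have "coprime (int p) i" using pp by (simp add: prime_imp_coprime_int)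
  then have g1: "gcd i (int p) = 1" by (simp add: coprime_iff_gcd_eq_1 gcd.commute)
  obtain s t where st: "s * i + t * int p = gcd i (int p)" using bezout_int by blast
  have "w = w [^] (i * s + int p * t)" using st g1 w by (simp add: mult.commute)
  also have "\<dots> = w [^] (i * s) \<otimes> w [^] (int p * t)" using w by (rule int_pow_mult)
  also have "\<dots> = (w [^] i) [^] s \<otimes> (w [^] (int p)) [^] t" using w by (simp only: int_pow_pow)
  also have "\<dots> = u [^] s" using wp' i w by simp
  finally show ?thesis using cyc_def by blast
qed

lemma exists_order_p:
  assumes "x \<in> carrier G" "x \<noteq> \<one>"
  shows "\<exists>a\<in>carrier G. a [^] p = \<one> \<and> a \<noteq> \<one>"
proof -
  obtain j where j: "ord x = p ^ j" using ord_pp assms(1) by blast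
  have "j \<noteq> 0"
  proof
    assume "j = 0" then have "ord x = 1" using j by simp
    then show False using ord_eq_1 assms by simp
  qed
  then obtain k where k: "j = Suc k" using not0_implies_Suc by blast
  define a where "a = x [^] (p ^ k)"
  have "a [^] p = x [^] (p ^ k * p)" using assms(1) a_def by (simp only: nat_pow_pow)
  also have "p ^ k * p = p ^ Suc k" by simp
  also have "x [^] (p ^ Suc k) = \<one>" using j k assms(1) pow_eq_id by simp
  finally have 1: "a [^] p = \<one>" .
  have "\<not> p ^ Suc k dvd p ^ k" using p_gt1 power_dvd_imp_le by fastforce
  then have "a \<noteq> \<one>" using j k a_def assms(1) pow_eq_id by simp
  then show ?thesis using 1 a_def assms(1) by auto
qed

lemma inj_ext:
  assumes B: "B \<subseteq> carrier G" "\<one> \<in> B" "\<And>y z. y \<in> B \<Longrightarrow> z \<in> B \<Longrightarrow> y \<otimes> z \<in> B"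
      "\<And>y i. y \<in> B \<Longrightarrow> y [^] (i::int) \<in> B"
      "\<And>y s. y \<in> B \<Longrightarrow> \<exists>z\<in>B. z [^] (p ^ s) = y"
    and p0: "pmap \<Gamma>0" and v0: "\<And>k y. (k,y) \<in> \<Gamma>0 \<Longrightarrow> y \<in> B"
  shows "\<exists>f\<in>hom G G. (\<forall>x\<in>carrier G. f x \<in> B) \<and> (\<forall>k y. (k,y) \<in> \<Gamma>0 \<longrightarrow> f k = y)"
proof (rule zorn_ext[where Q = "\<lambda>k y. y \<in> B", OF p0 v0])
  fix \<Gamma> assume pm: "pmap \<Gamma>" and sub: "\<Gamma>0 \<subseteq> \<Gamma>" and q: "\<forall>k y. (k,y) \<in> \<Gamma> \<longrightarrow> y \<in> B"
    and nd: "pdom \<Gamma> \<noteq> carrier G"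
  have "pdom \<Gamma> \<subseteq> carrier G" using pdom_carrier[OF pm] by blast
  then obtain x where x: "x \<in> carrier G" "x \<notin> pdom \<Gamma>" using nd by blast
  obtain N where N: "x [^] (p ^ N) = \<one>" using ptor x(1) by blast
  have "p ^ N > 0" using p_gt1 by simp
  then obtain m where m: "m > 0" "\<And>i::int. x [^] i \<in> pdom \<Gamma> \<longleftrightarrow> int m dvd i" "m dvd p ^ N"
    using min_exp[OF pm x(1) _ N] by blast
  obtain s where s: "m = p ^ s" using m(3) divides_primepow_nat[OF pp] by blast
  have "x [^] (int m) \<in> pdom \<Gamma>" using m(2) by simp
  then obtain \<alpha> where al: "(x [^] (int m), \<alpha>) \<in> \<Gamma>" using pdom_def by blast
  then have "\<alpha> \<in> B" using q by blast
  then obtain d where d: "d \<in> B" "d [^] (p ^ s) = \<alpha>" using B(5) by blast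
  have dc: "d \<in> carrier G" using d(1) B(1) by blast
  have "d [^] (int m) = d [^] m" by (rule int_pow_int)
  then have "d [^] (int m) = \<alpha>" using d s by simp
  then have "(x [^] (int m), d [^] (int m)) \<in> \<Gamma>" using al by simp
  note E = pext[OF pm x(1) dc _ this]
  have "(x,d) \<notin> \<Gamma>" using x(2) pdom_def by blast
  then have "\<Gamma> \<subset> pext \<Gamma> x d" using E(2,3) m(2) by blast
  moreover have "\<forall>k y. (k,y) \<in> pext \<Gamma> x d \<longrightarrow> y \<in> B"
  proof (intro allI impI)
    fix k y assume "(k,y) \<in> pext \<Gamma> x d"
    then obtain k1 a1 i where "(k1,a1) \<in> \<Gamma>" "y = a1 \<otimes> d [^] (i::int)" unfolding pext_def by blast
    then show "y \<in> B" using q B(3,4) d(1) by blast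
  qed
  ultimately show "\<exists>\<Gamma>'. pmap \<Gamma>' \<and> \<Gamma> \<subset> \<Gamma>' \<and> (\<forall>k y. (k,y) \<in> \<Gamma>' \<longrightarrow> y \<in> B)"
    using E(1) m(2) by blast
qed

end

context pgrp begin

lemma hom_npow: "f \<in> hom G G \<Longrightarrow> x \<in> carrier G \<Longrightarrow> f (x [^] (n::nat)) = f x [^] n"
  using hom_nat_pow[of f G G x n] is_group by blast

lemma hom_ipow: "f \<in> hom G G \<Longrightarrow> x \<in> carrier G \<Longrightarrow> f (x [^] (n::int)) = f x [^] n"
  using hom_int_pow[of f G G x n] is_group by blast

lemma pext_triv:
  assumes x: "x \<in> carrier G" "x [^] p = \<one>" "x \<noteq> \<one>" and d: "d \<in> carrier G" "d [^] p = \<one>"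
  shows "pmap (pext {(\<one>,\<one>)} x d)" "(x,d) \<in> pext {(\<one>,\<one>)} x d"
    "\<And>k y. (k,y) \<in> pext {(\<one>,\<one>)} x d \<Longrightarrow> \<exists>i::int. y = d [^] i"
proof -
  have pm: "pmap {(\<one>,\<one>)}" using pmap_triv comm_group_axioms by blast
  have ox: "ord x = p" using ord_p x by blast
  have dv: "int p dvd i" if "x [^] (i::int) \<in> pdom {(\<one>,\<one>)}" for i
  proof -
    have "x [^] i = \<one>" using that pdom_def by auto
    then show ?thesis using pow_one_iff[OF x(1)] ox by simp
  qed
  have "x [^] (int p) = \<one>" "d [^] (int p) = \<one>" using x d by (simp_all only: int_pow_int)
  then have xm: "(x [^] (int p), d [^] (int p)) \<in> {(\<one>,\<one>)}" by simp
  note E = pext[OF pm x(1) d(1) dv xm]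
  show "pmap (pext {(\<one>,\<one>)} x d)" "(x,d) \<in> pext {(\<one>,\<one>)} x d" using E by auto
  fix k y assume "(k,y) \<in> pext {(\<one>,\<one>)} x d"
  then obtain i where "y = \<one> \<otimes> d [^] (i::int)" unfolding pext_def by blast
  then show "\<exists>i::int. y = d [^] i" using d by auto
qed

lemma caseD:
  assumes CE: "centrally_essential (End_ring G)"
    and dv: "\<And>x. x \<in> carrier G \<Longrightarrow> \<exists>y\<in>carrier G. y [^] p = x"
    and u: "u \<in> carrier G" "u [^] p = \<one>" "u \<noteq> \<one>"
    and v: "v \<in> carrier G" "v [^] p = \<one>"
  shows "v \<in> cyc u"
proof (rule ccontr)
  assume vu: "v \<notin> cyc u"
  define b where "b = rec_nat u (\<lambda>n y. SOME z. z \<in> carrier G \<and> z [^] p = y)"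
  have b0: "b 0 = u" by (simp add: b_def)
  have bS: "b (Suc n) = (SOME z. z \<in> carrier G \<and> z [^] p = b n)" for n by (simp add: b_def)
  have bc: "b n \<in> carrier G \<and> b (Suc n) \<in> carrier G \<and> b (Suc n) [^] p = b n" for n
  proof (induction n)
    case 0
    have ex: "\<exists>z. z \<in> carrier G \<and> z [^] p = b 0" using dv u(1) b0 by blast
    show ?case using someI_ex[OF ex] bS[of 0] b0 u(1) by simp
  next
    case (Suc n)
    have ex: "\<exists>z. z \<in> carrier G \<and> z [^] p = b (Suc n)" using dv Suc by blast
    show ?case using someI_ex[OF ex] bS[of "Suc n"] Suc by simp
  qed
  have bC: "\<And>n. b n \<in> carrier G" using bc by blast
  have bp: "\<And>n. b (Suc n) [^] p = b n" using bc by blast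
  have bl: "b n = b (n + k) [^] (p ^ k)" for n k
  proof (induction k)
    case 0 then show ?case using bC[of n] by simp
  next
    case (Suc k)
    have "b (n + Suc k) [^] (p ^ Suc k) = b (n + Suc k) [^] (p * p ^ k)" by simp
    also have "\<dots> = (b (n + Suc k) [^] p) [^] (p ^ k)" using bC by (simp only: nat_pow_pow)
    also have "\<dots> = b (n + k) [^] (p ^ k)" using bp[of "n + k"] by simp
    finally show ?case using Suc by simp
  qed
  have bu: "b n [^] (p ^ n) = u" for n using bl[of 0 n] b0 by simp
  have ordb: "ord (b n) = p ^ Suc n" for n
  proof (rule ord_exact[OF bC])
    have "b n [^] (p ^ Suc n) = b n [^] (p ^ n * p)" by (simp add: mult.commute)
    also have "\<dots> = (b n [^] (p ^ n)) [^] p" using bC by (simp only: nat_pow_pow)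
    finally show "b n [^] (p ^ Suc n) = \<one>" using bu u by simp
    show "b n [^] (p ^ n) \<noteq> \<one>" using bu u by simp
  qed
  have bli: "b n [^] (i::int) = b (n + k) [^] (int (p ^ k) * i)" for n k i
  proof -
    have "b n = b (n + k) [^] (int (p ^ k))" using bl[of n k] by (simp only: int_pow_int)
    then show ?thesis using bC by (simp add: int_pow_pow)
  qed
  define B where "B = {y. \<exists>n (i::int). y = b n [^] i}"
  have B1: "B \<subseteq> carrier G" using B_def bC by auto
  have B2: "\<one> \<in> B" unfolding B_def by (rule CollectI, rule exI[of _ 0], rule exI[of _ 0]) simp
  have B3: "y \<otimes> z \<in> B" if hyp: "y \<in> B" "z \<in> B" for y z
  proof -
    obtain n i where y: "y = b n [^] (i::int)" using hyp(1) B_def by blast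
    obtain m j where z: "z = b m [^] (j::int)" using hyp(2) B_def by blast
    have "y = b (n + m) [^] (int (p ^ m) * i)" using y bli by blast
    moreover have "z = b (n + m) [^] (int (p ^ n) * j)" using z bli[of m j n] by (simp add: add.commute)
    ultimately have "y \<otimes> z = b (n + m) [^] (int (p ^ m) * i + int (p ^ n) * j)"
      using bC by (simp add: int_pow_mult)
    then show ?thesis using B_def by blast
  qed
  have B4: "y [^] (i::int) \<in> B" if hyp: "y \<in> B" for y i
  proof -
    obtain n j where y: "y = b n [^] (j::int)" using hyp B_def by blast
    then have "y [^] i = b n [^] (j * i)" using bC by (simp add: int_pow_pow)
    then show ?thesis using B_def by blast
  qed
  have B5: "\<exists>z\<in>B. z [^] (p ^ s) = y" if hyp: "y \<in> B" for y s
  proof -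
    obtain n i where y: "y = b n [^] (i::int)" using hyp B_def by blast
    define z where "z = b (n + s) [^] i"
    have zB: "z \<in> B" using z_def B_def by blast
    have "z [^] (p ^ s) = z [^] (int (p ^ s))" by (simp only: int_pow_int)
    also have "\<dots> = b (n + s) [^] (i * int (p ^ s))" using z_def bC by (simp only: int_pow_pow)
    also have "\<dots> = b (n + s) [^] (int (p ^ s) * i)" by (simp only: mult.commute)
    also have "\<dots> = y" using y bli by simp
    finally show ?thesis using zB by blast
  qed
  have Bp: "y \<in> cyc u" if hyp: "y \<in> B" "y [^] p = \<one>" for y
  proof -
    obtain n i where y: "y = b n [^] (i::int)" using hyp B_def by blast
    have "y [^] (int p) = \<one>" using hyp(2) by (simp only: int_pow_int)
    then have "b n [^] (i * int p) = \<one>" using y bC by (simp add: int_pow_pow)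
    then have "int (p ^ Suc n) dvd i * int p" using pow_one_iff[OF bC] ordb by simp
    then have "int (p ^ n) * int p dvd i * int p" by (simp add: mult.commute)
    then have "int (p ^ n) dvd i" using p_gt1 by (simp add: dvd_mult_cancel_right)
    then obtain t where t: "i = int (p ^ n) * t" by (meson dvdE)
    have "y = (b n [^] (int (p ^ n))) [^] t" using y t bC by (simp add: int_pow_pow)
    also have "\<dots> = u [^] t" using bu by (simp only: int_pow_int)
    finally show ?thesis using cyc_def by blast
  qed
  have "u = b 0 [^] (1::int)" using b0 bC[of 0] by simp
  then have uB: "u \<in> B" using B_def by blast
  define \<Gamma>0 where "\<Gamma>0 = {z. \<exists>y\<in>B. z = (y,y)}"
  have p0: "pmap \<Gamma>0" unfolding pmap_def \<Gamma>0_def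
  proof (intro conjI allI impI)
    show "{z. \<exists>y\<in>B. z = (y, y)} \<subseteq> carrier G \<times> carrier G" using B1 by auto
    show "(\<one>, \<one>) \<in> {z. \<exists>y\<in>B. z = (y, y)}" using B2 by auto
  next
    fix a x b y assume "(a,x) \<in> {z. \<exists>y\<in>B. z = (y, y)}" "(b,y) \<in> {z. \<exists>y\<in>B. z = (y, y)}"
    then show "(a \<otimes> b, x \<otimes> y) \<in> {z. \<exists>y\<in>B. z = (y, y)}" using B3 by auto
  next
    fix a x assume h: "(a,x) \<in> {z. \<exists>y\<in>B. z = (y, y)}"
    then have "inv a = a [^] (-1::int)" "a \<in> B" "a = x" using B1 by (auto simp: int_pow_neg)
    then show "(inv a, inv x) \<in> {z. \<exists>y\<in>B. z = (y, y)}" using B4 by auto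
  next
    fix a x y assume "(a,x) \<in> {z. \<exists>y\<in>B. z = (y, y)}" "(a,y) \<in> {z. \<exists>y\<in>B. z = (y, y)}"
    then show "x = y" by auto
  qed
  have v0: "\<And>k y. (k,y) \<in> \<Gamma>0 \<Longrightarrow> y \<in> B" unfolding \<Gamma>0_def by blast
  obtain e where e: "e \<in> hom G G" "\<And>x. x \<in> carrier G \<Longrightarrow> e x \<in> B" "\<And>k y. (k,y) \<in> \<Gamma>0 \<Longrightarrow> e k = y"
  proof -
    have "\<exists>f\<in>hom G G. (\<forall>x\<in>carrier G. f x \<in> B) \<and> (\<forall>k y. (k,y) \<in> \<Gamma>0 \<longrightarrow> f k = y)"
      by (rule inj_ext[of B \<Gamma>0]) (use B1 in \<open>auto intro: B2 B3 B4 B5 p0 v0\<close>)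
    then show ?thesis using that by blast
  qed
  have eB: "e y = y" if hyp: "y \<in> B" for y
  proof -
    have "(y,y) \<in> \<Gamma>0" unfolding \<Gamma>0_def using hyp by blast
    then show ?thesis using e(3) by blast
  qed
  have eidem: "e (e x) = e x" if "x \<in> carrier G" for x using eB e(2) that by blast
  have evC: "e v \<in> carrier G" using hom_in[OF e(1) v(1)] .
  have "e v [^] p = \<one>" using hom_npow[OF e(1) v(1), of p, symmetric] v(2) hom_one'[OF e(1)] by simp
  then have evu: "e v \<in> cyc u" using Bp e(2) v(1) by blast
  define v' where "v' = v \<otimes> inv (e v)"
  have v'C: "v' \<in> carrier G" using v'_def v(1) evC by simp
  have v'1: "v' \<noteq> \<one>"
  proof
    assume "v' = \<one>" then have "v = e v" using div_one_eq[OF v(1) evC] v'_def by simp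
    then show False using vu evu by simp
  qed
  have "v' [^] p = v [^] p \<otimes> inv (e v [^] p)" using v'_def v(1) evC by (simp add: nat_pow_distrib nat_pow_inv)
  then have v'p: "v' [^] p = \<one>" using v(2) \<open>e v [^] p = \<one>\<close> by simp
  have ev': "e v' = \<one>" using v'_def v(1) evC hom_mult'[OF e(1)] hom_inv'[OF e(1)] eidem by simp
  note T = pext_triv[OF v'C v'p v'1 u(1) u(2)]
  have vals: "\<And>k y. (k,y) \<in> pext {(\<one>,\<one>)} v' u \<Longrightarrow> y \<in> B" using T(3) B4 uB by blast
  obtain g where g: "g \<in> hom G G" "\<And>k y. (k,y) \<in> pext {(\<one>,\<one>)} v' u \<Longrightarrow> g k = y"
  proof -
    have "\<exists>f\<in>hom G G. (\<forall>x\<in>carrier G. f x \<in> B) \<and> (\<forall>k y. (k,y) \<in> pext {(\<one>,\<one>)} v' u \<longrightarrow> f k = y)"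
      by (rule inj_ext[of B]) (use B1 in \<open>auto intro: B2 B3 B4 B5 T(1) vals\<close>)
    then show ?thesis using that by blast
  qed
  have gv: "g v' = u" using g(2) T(2) by blast
  have "e (g v') = g (e v')" using idem_comm[OF CE e(1) eidem g(1) v'C] .
  then have "e u = \<one>" using gv ev' hom_one'[OF g(1)] by simp
  then show False using eB uB u(3) by simp
qed

end

context pgrp begin

definition pw :: "nat \<Rightarrow> 'a set" where "pw j = {z. \<exists>y\<in>carrier G. z = y [^] (p ^ j)}"

lemma pw_carrier: "z \<in> pw j \<Longrightarrow> z \<in> carrier G"
  unfolding pw_def by auto

lemma pw0: "z \<in> carrier G \<Longrightarrow> z \<in> pw 0"
  unfolding pw_def by force

lemma pw_one: "\<one> \<in> pw j"
  unfolding pw_def by force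

lemma pw_pow: assumes "z \<in> pw j" shows "z [^] (p ^ k) \<in> pw (j + k)"
proof -
  obtain y where y: "y \<in> carrier G" "z = y [^] (p ^ j)" using assms pw_def by blast
  have "z [^] (p ^ k) = y [^] (p ^ j * p ^ k)" using y by (simp only: nat_pow_pow)
  also have "p ^ j * p ^ k = p ^ (j + k)" by (simp add: power_add)
  finally show ?thesis using y pw_def by blast
qed

lemma pw_mono: assumes "z \<in> pw j" "j' \<le> j" shows "z \<in> pw j'"
proof -
  obtain y where y: "y \<in> carrier G" "z = y [^] (p ^ j)" using assms pw_def by blast
  have "p ^ j = p ^ (j - j') * p ^ j'" using assms(2) by (simp add: power_add[symmetric])
  then have "z = (y [^] (p ^ (j - j'))) [^] (p ^ j')" using y by (simp add: nat_pow_pow)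
  then show ?thesis using y pw_def by auto
qed

lemma pw_mult: assumes "z \<in> pw j" "w \<in> pw j" shows "z \<otimes> w \<in> pw j"
proof -
  obtain y where y: "y \<in> carrier G" "z = y [^] (p ^ j)" using assms pw_def by blast
  obtain y' where y': "y' \<in> carrier G" "w = y' [^] (p ^ j)" using assms pw_def by blast
  have "z \<otimes> w = (y \<otimes> y') [^] (p ^ j)" using y y' by (simp add: nat_pow_distrib)
  then show ?thesis using y y' pw_def by auto
qed

lemma pw_ipow: assumes "z \<in> pw j" shows "z [^] (c::int) \<in> pw j"
proof -
  obtain y where y: "y \<in> carrier G" "z = y [^] (p ^ j)" using assms pw_def by blast
  have "z = y [^] (int (p ^ j))" using y by (simp only: int_pow_int)
  then have "z [^] c = y [^] (int (p ^ j) * c)" using y by (simp only: int_pow_pow)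
  also have "\<dots> = (y [^] c) [^] (int (p ^ j))" using y by (simp only: int_pow_pow mult.commute)
  also have "\<dots> = (y [^] c) [^] (p ^ j)" by (simp only: int_pow_int)
  finally show ?thesis using y pw_def by auto
qed

lemma pw_inv: assumes "z \<in> pw j" shows "inv z \<in> pw j"
proof -
  have "inv z = z [^] (-1::int)" using pw_carrier[OF assms] by (simp add: int_pow_neg)
  then show ?thesis using pw_ipow[OF assms] by simp
qed

lemma div_crit:
  assumes H: "\<And>a j. a \<in> carrier G \<Longrightarrow> a [^] p = \<one> \<Longrightarrow> a \<in> pw j"
    and x: "x \<in> carrier G"
  shows "\<exists>y\<in>carrier G. y [^] p = x"
proof -
  have claim: "\<forall>x\<in>carrier G. x [^] (p ^ k) = \<one> \<longrightarrow> (\<exists>y\<in>carrier G. y [^] p = x)" for k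
  proof (induction k)
    case 0
    show ?case
    proof (intro ballI impI)
      fix x assume "x \<in> carrier G" "x [^] (p ^ 0) = \<one>"
      then have "x = \<one>" by simp
      then show "\<exists>y\<in>carrier G. y [^] p = x" using one_closed nat_pow_one by metis
    qed
  next
    case (Suc k)
    show ?case
    proof (intro ballI impI)
      fix x assume xc: "x \<in> carrier G" and xk: "x [^] (p ^ Suc k) = \<one>"
      define w where "w = x [^] (p ^ k)"
      have wc: "w \<in> carrier G" using xc w_def by simp
      have "w [^] p = x [^] (p ^ k * p)" using xc w_def by (simp only: nat_pow_pow)
      then have "w [^] p = \<one>" using xk by (simp add: mult.commute)
      then have "w \<in> pw (Suc k)" using H wc by blast
      then obtain y where y: "y \<in> carrier G" "w = y [^] (p ^ Suc k)" using pw_def by blast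
      define z where "z = x \<otimes> inv (y [^] p)"
      have zc: "z \<in> carrier G" using z_def xc y by simp
      have "z [^] (p ^ k) = x [^] (p ^ k) \<otimes> inv ((y [^] p) [^] (p ^ k))"
        using z_def xc y by (simp add: nat_pow_distrib nat_pow_inv)
      also have "(y [^] p) [^] (p ^ k) = y [^] (p * p ^ k)" using y by (simp only: nat_pow_pow)
      also have "p * p ^ k = p ^ Suc k" by simp
      finally have "z [^] (p ^ k) = \<one>" using w_def y wc by simp
      then obtain t where t: "t \<in> carrier G" "t [^] p = z" using Suc.IH zc by blast
      have "x = z \<otimes> y [^] p" using z_def xc y by (simp add: m_assoc)
      also have "\<dots> = (t \<otimes> y) [^] p" using t y by (simp add: nat_pow_distrib)
      finally show "\<exists>y\<in>carrier G. y [^] p = x" using t y by auto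
    qed
  qed
  obtain N where "x [^] (p ^ N) = \<one>" using ptor x by blast
  then show ?thesis using claim x by blast
qed

end

context pgrp begin

lemma purity:
  assumes b: "b \<in> carrier G" "ord b = p ^ Suc n" "b [^] (p ^ n) \<notin> pw (Suc n)"
    and bi: "b [^] (i::int) \<in> pw j"
  shows "\<exists>t::int. b [^] i = b [^] (int (p ^ j) * t)"
proof (cases "int (p ^ Suc n) dvd i")
  case True
  then have "b [^] i = \<one>" using pow_one_iff[OF b(1)] b(2) by simp
  then show ?thesis by (intro exI[of _ 0]) simp
next
  case False
  define M where "M = int (p ^ Suc n)"
  define g where "g = gcd i M"
  have g0: "g \<ge> 0" using g_def by simp
  have gM: "g dvd M" and gi: "g dvd i" using g_def by auto
  have "int (nat g) dvd int (p ^ Suc n)" using gM g0 M_def by simp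
  then have "nat g dvd p ^ Suc n" by (simp only: of_nat_dvd_iff)
  then obtain s where s: "s \<le> Suc n" "nat g = p ^ s" using divides_primepow_nat[OF pp] by blast
  have gs: "g = int (p ^ s)" using s(2) g0 by (metis int_nat_eq nat_0_le of_nat_0_le_iff)
  have "s \<noteq> Suc n" using False gi gs by auto
  then have sn: "s \<le> n" using s(1) by simp
  show ?thesis
  proof (cases "j \<le> s")
    case True
    have "int (p ^ j) dvd int (p ^ s)" using True by (simp add: le_imp_power_dvd)
    then have "int (p ^ j) dvd i" using gi gs dvd_trans by blast
    then obtain t where "i = int (p ^ j) * t" by (meson dvdE)
    then show ?thesis by blast
  next
    case False
    obtain \<alpha> \<beta> where ab: "\<alpha> * i + \<beta> * M = g" using bezout_int g_def by blast
    have bM: "b [^] M = \<one>" using pow_one_iff[OF b(1)] b(2) M_def by simp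
    have "b [^] g = b [^] (i * \<alpha> + M * \<beta>)" using ab by (simp add: mult.commute)
    also have "\<dots> = b [^] (i * \<alpha>) \<otimes> b [^] (M * \<beta>)" using b(1) by (rule int_pow_mult)
    also have "\<dots> = (b [^] i) [^] \<alpha> \<otimes> (b [^] M) [^] \<beta>" using b(1) by (simp only: int_pow_pow)
    also have "\<dots> = (b [^] i) [^] \<alpha>" using bM b(1) by simp
    finally have "b [^] g \<in> pw j" using pw_ipow[OF bi] by simp
    moreover have "b [^] g = b [^] (p ^ s)" using gs by (simp only: int_pow_int)
    ultimately have bs: "b [^] (p ^ s) \<in> pw j" by simp
    have "b [^] (p ^ n) = (b [^] (p ^ s)) [^] (p ^ (n - s))"
      using b(1) sn by (simp add: nat_pow_pow power_add[symmetric])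
    then have "b [^] (p ^ n) \<in> pw (j + (n - s))" using pw_pow[OF bs] by simp
    moreover have "Suc n \<le> j + (n - s)" using False sn by simp
    ultimately show ?thesis using pw_mono b(3) by blast
  qed
qed

definition bp :: "'a \<Rightarrow> nat \<Rightarrow> 'a set" where
  "bp b j = {y. \<exists>t::int. y = b [^] (int (p ^ j) * t)}"

lemma bp_carrier: "b \<in> carrier G \<Longrightarrow> y \<in> bp b j \<Longrightarrow> y \<in> carrier G"
  unfolding bp_def by auto

lemma bp_one: "b \<in> carrier G \<Longrightarrow> \<one> \<in> bp b j"
  unfolding bp_def by (rule CollectI, rule exI[of _ 0]) simp

lemma bp_mult: assumes "b \<in> carrier G" "y \<in> bp b j" "z \<in> bp b j" shows "y \<otimes> z \<in> bp b j"
proof -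
  obtain t where t: "y = b [^] (int (p ^ j) * t)" using assms bp_def by blast
  obtain t' where t': "z = b [^] (int (p ^ j) * t')" using assms bp_def by blast
  have "y \<otimes> z = b [^] (int (p ^ j) * t + int (p ^ j) * t')" using t t' assms(1) by (simp only: int_pow_mult)
  also have "int (p ^ j) * t + int (p ^ j) * t' = int (p ^ j) * (t + t')" by (simp add: distrib_left)
  finally show ?thesis unfolding bp_def by blast
qed

lemma bp_ipow: assumes "b \<in> carrier G" "y \<in> bp b j" shows "y [^] (c::int) \<in> bp b j"
proof -
  obtain t where "y = b [^] (int (p ^ j) * t)" using assms bp_def by blast
  then have "y [^] c = b [^] (int (p ^ j) * (t * c))" using assms(1) by (simp add: int_pow_pow mult.assoc)
  then show ?thesis unfolding bp_def by blast
qed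

lemma bp_mono: assumes "b \<in> carrier G" "y \<in> bp b j" "j' \<le> j" shows "y \<in> bp b j'"
proof -
  obtain t where t: "y = b [^] (int (p ^ j) * t)" using assms bp_def by blast
  have "int (p ^ j) = int (p ^ j') * int (p ^ (j - j'))" using assms(3) by (simp add: power_add[symmetric])
  then have "y = b [^] (int (p ^ j') * (int (p ^ (j - j')) * t))" using t by (simp add: mult.assoc)
  then show ?thesis unfolding bp_def by blast
qed

lemma bp0: "y \<in> bp b 0 \<longleftrightarrow> y \<in> cyc b"
  unfolding bp_def cyc_def by simp

lemma proj_ND:
  assumes b: "b \<in> carrier G" "ord b = p ^ Suc n" "b [^] (p ^ n) \<notin> pw (Suc n)"
  shows "\<exists>e\<in>hom G G. (\<forall>x\<in>carrier G. e x \<in> cyc b) \<and> (\<forall>i::int. e (b [^] i) = b [^] i)"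
proof -
  define Q where "Q = (\<lambda>k y. \<forall>j. k \<in> pw j \<longrightarrow> y \<in> bp b j)"
  define \<Gamma>0 where "\<Gamma>0 = {z. \<exists>(i::int) w. w \<in> pw (Suc n) \<and> z = (b [^] i \<otimes> w, b [^] i)}"
  have bC: "\<And>i::int. b [^] i \<in> carrier G" using b(1) by simp
  have p0: "pmap \<Gamma>0" unfolding pmap_def
  proof (intro conjI allI impI)
    show "\<Gamma>0 \<subseteq> carrier G \<times> carrier G" unfolding \<Gamma>0_def using pw_carrier b(1) by auto
    have "(\<one>, \<one>) = (b [^] (0::int) \<otimes> \<one>, b [^] (0::int))" by simp
    then show "(\<one>, \<one>) \<in> \<Gamma>0" unfolding \<Gamma>0_def using pw_one by blast
  next
    fix a1 x1 a2 x2 assume h1: "(a1,x1) \<in> \<Gamma>0" and h2: "(a2,x2) \<in> \<Gamma>0"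
    obtain i1 w1 where e1: "w1 \<in> pw (Suc n)" "a1 = b [^] i1 \<otimes> w1" "x1 = b [^] (i1::int)"
      using h1 \<Gamma>0_def by blast
    obtain i2 w2 where e2: "w2 \<in> pw (Suc n)" "a2 = b [^] i2 \<otimes> w2" "x2 = b [^] (i2::int)"
      using h2 \<Gamma>0_def by blast
    have "a1 \<otimes> a2 = b [^] (i1 + i2) \<otimes> (w1 \<otimes> w2)"
      using e1 e2 b(1) pw_carrier by (simp add: mult4 int_pow_mult)
    moreover have "x1 \<otimes> x2 = b [^] (i1 + i2)" using e1 e2 b(1) by (simp add: int_pow_mult)
    moreover have "w1 \<otimes> w2 \<in> pw (Suc n)" using pw_mult e1 e2 by blast
    ultimately show "(a1 \<otimes> a2, x1 \<otimes> x2) \<in> \<Gamma>0" unfolding \<Gamma>0_def by blast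
  next
    fix a1 x1 assume h1: "(a1,x1) \<in> \<Gamma>0"
    obtain i1 w1 where e1: "w1 \<in> pw (Suc n)" "a1 = b [^] i1 \<otimes> w1" "x1 = b [^] (i1::int)"
      using h1 \<Gamma>0_def by blast
    have "inv a1 = b [^] (- i1) \<otimes> inv w1"
      using e1 b(1) pw_carrier by (simp add: inv_mult_comm int_pow_neg)
    moreover have "inv x1 = b [^] (- i1)" using e1 b(1) by (simp add: int_pow_neg)
    moreover have "inv w1 \<in> pw (Suc n)" using pw_inv e1 by blast
    ultimately show "(inv a1, inv x1) \<in> \<Gamma>0" unfolding \<Gamma>0_def by blast
  next
    fix a1 x1 x2 assume h1: "(a1,x1) \<in> \<Gamma>0" and h2: "(a1,x2) \<in> \<Gamma>0"
    obtain i1 w1 where e1: "w1 \<in> pw (Suc n)" "a1 = b [^] i1 \<otimes> w1" "x1 = b [^] (i1::int)"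
      using h1 \<Gamma>0_def by blast
    obtain i2 w2 where e2: "w2 \<in> pw (Suc n)" "a1 = b [^] i2 \<otimes> w2" "x2 = b [^] (i2::int)"
      using h2 \<Gamma>0_def by blast
    have wc: "w1 \<in> carrier G" "w2 \<in> carrier G" using e1 e2 pw_carrier by auto
    have "inv (b [^] i1) \<otimes> b [^] i2 = w1 \<otimes> inv w2"
      using e1(2) e2(2) eq_shift[of "b [^] i1" w1 "b [^] i2" w2] wc bC by simp
    moreover have "inv (b [^] i1) \<otimes> b [^] i2 = b [^] (i2 - i1)"
      using b(1) by (simp add: int_pow_diff m_comm)
    moreover have "w1 \<otimes> inv w2 \<in> pw (Suc n)" using pw_mult pw_inv e1 e2 by blast
    ultimately have "b [^] (i2 - i1) \<in> pw (Suc n)" by simp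
    then obtain t where "b [^] (i2 - i1) = b [^] (int (p ^ Suc n) * t)" using purity[OF b] by blast
    also have "\<dots> = \<one>" using pow_one_iff[OF b(1)] b(2) by simp
    finally have "b [^] (i2 - i1) = \<one>" .
    then have "int (ord b) dvd i2 - i1" using pow_one_iff[OF b(1)] by simp
    then have "b [^] i1 = b [^] i2" using int_pow_eq[OF b(1)] by simp
    then show "x1 = x2" using e1 e2 by simp
  qed
  have q0: "Q k y" if hyp: "(k,y) \<in> \<Gamma>0" for k y
    unfolding Q_def
  proof (intro allI impI)
    fix j assume kj: "k \<in> pw j"
    obtain i w where e1: "w \<in> pw (Suc n)" "k = b [^] i \<otimes> w" "y = b [^] (i::int)"
      using hyp \<Gamma>0_def by blast
    define j' where "j' = min j (Suc n)"
    have "k \<in> pw j'" using kj pw_mono j'_def by simp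
    moreover have "w \<in> pw j'" using e1(1) pw_mono j'_def by simp
    ultimately have "k \<otimes> inv w \<in> pw j'" using pw_mult pw_inv by blast
    moreover have "k \<otimes> inv w = b [^] i" using e1 pw_carrier b(1) by (simp add: m_assoc)
    ultimately have "b [^] i \<in> pw j'" by simp
    then obtain t where t: "b [^] i = b [^] (int (p ^ j') * t)" using purity[OF b] by blast
    show "y \<in> bp b j"
    proof (cases "j \<le> Suc n")
      case True then show ?thesis using t e1(3) j'_def bp_def by auto
    next
      case False
      then have "j' = Suc n" using j'_def by simp
      then have "b [^] i = \<one>" using t pow_one_iff[OF b(1)] b(2) by simp
      then show ?thesis using e1(3) bp_one[OF b(1)] by simp
    qed
  qed
  have pwsub: "w \<in> pdom \<Gamma>" if "\<Gamma>0 \<subseteq> \<Gamma>" "w \<in> pw (Suc n)" for w \<Gamma>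
  proof -
    have "(b [^] (0::int) \<otimes> w, b [^] (0::int)) \<in> \<Gamma>0" unfolding \<Gamma>0_def using that(2) by blast
    then have "(w, \<one>) \<in> \<Gamma>0" using that pw_carrier by simp
    then have "(w, \<one>) \<in> \<Gamma>" using that(1) by blast
    then show ?thesis unfolding pdom_def by blast
  qed
  have "\<exists>f\<in>hom G G. (\<forall>x\<in>carrier G. Q x (f x)) \<and> (\<forall>k y. (k,y) \<in> \<Gamma>0 \<longrightarrow> f k = y)"
  proof (rule zorn_ext[OF p0])
    show "\<And>k y. (k,y) \<in> \<Gamma>0 \<Longrightarrow> Q k y" using q0 by blast
  next
    fix \<Gamma> assume pm: "pmap \<Gamma>" and sub: "\<Gamma>0 \<subseteq> \<Gamma>" and q: "\<forall>k y. (k,y) \<in> \<Gamma> \<longrightarrow> Q k y"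
      and nd: "pdom \<Gamma> \<noteq> carrier G"
    have "pdom \<Gamma> \<subseteq> carrier G" using pdom_carrier[OF pm] by blast
    then obtain y where y: "y \<in> carrier G" "y \<notin> pdom \<Gamma>" using nd by blast
    obtain N where N: "y [^] (p ^ N) = \<one>" using ptor y(1) by blast
    define T where "T = (LEAST t. y [^] (p ^ t) \<in> pdom \<Gamma>)"
    have yN: "y [^] (p ^ N) \<in> pdom \<Gamma>" using N pdom_one[OF pm] by simp
    have T1: "y [^] (p ^ T) \<in> pdom \<Gamma>" using yN T_def by (metis LeastI)
    have T2: "\<And>t. t < T \<Longrightarrow> y [^] (p ^ t) \<notin> pdom \<Gamma>" using T_def not_less_Least by blast
    have "T \<noteq> 0"
    proof
      assume "T = 0"
      then have "y [^] (p ^ 0) \<in> pdom \<Gamma>" using T1 by simp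
      then show False using y by simp
    qed
    then obtain T' where T': "T = Suc T'" using not0_implies_Suc by blast
    define x0 where "x0 = y [^] (p ^ T')"
    have x0C: "x0 \<in> carrier G" using x0_def y by simp
    have x0n: "x0 \<notin> pdom \<Gamma>" using T2[of T'] T' x0_def by simp
    have "x0 [^] p = y [^] (p ^ T' * p)" using x0_def y by (simp only: nat_pow_pow)
    then have x0p: "x0 [^] p \<in> pdom \<Gamma>" using T1 T' by (simp add: mult.commute)
    define H where "H = {h. \<exists>k\<in>pdom \<Gamma>. x0 \<otimes> k \<in> pw h}"
    have Hb: "h \<le> n" if hH: "h \<in> H" for h
    proof (rule ccontr)
      assume "\<not> h \<le> n"
      obtain k where k: "k \<in> pdom \<Gamma>" "x0 \<otimes> k \<in> pw h" using hH H_def by blast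
      then have "x0 \<otimes> k \<in> pw (Suc n)" using pw_mono \<open>\<not> h \<le> n\<close> by simp
      then have "x0 \<otimes> k \<in> pdom \<Gamma>" using pwsub sub by blast
      then have "(x0 \<otimes> k) \<otimes> inv k \<in> pdom \<Gamma>" using pdom_mult pdom_inv pm k(1) by blast
      moreover have "(x0 \<otimes> k) \<otimes> inv k = x0" using x0C pdom_carrier[OF pm k(1)] by (simp add: m_assoc)
      ultimately show False using x0n by simp
    qed
    have H0: "0 \<in> H" unfolding H_def using pdom_one[OF pm] x0C pw0 by force
    have Hfin: "finite H" using Hb by (meson finite_nat_set_iff_bounded_le)
    define h where "h = Max H"
    have hH: "h \<in> H" using Hfin H0 h_def Max_in by blast
    have hmax: "\<And>h'. h' \<in> H \<Longrightarrow> h' \<le> h" using Hfin h_def by simp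
    obtain k0 where k0: "k0 \<in> pdom \<Gamma>" "x0 \<otimes> k0 \<in> pw h" using hH H_def by blast
    have k0C: "k0 \<in> carrier G" using pdom_carrier[OF pm k0(1)] .
    define x where "x = x0 \<otimes> k0"
    have xC: "x \<in> carrier G" using x_def x0C k0C by simp
    have xh: "x \<in> pw h" using k0 x_def by simp
    have xnd: "x \<notin> pdom \<Gamma>"
    proof
      assume "x \<in> pdom \<Gamma>"
      then have "x \<otimes> inv k0 \<in> pdom \<Gamma>" using pdom_mult pdom_inv pm k0(1) by blast
      moreover have "x \<otimes> inv k0 = x0" using x_def x0C k0C by (simp add: m_assoc)
      ultimately show False using x0n by simp
    qed
    have xmax: "x \<otimes> k \<notin> pw (Suc h)" if kd: "k \<in> pdom \<Gamma>" for k
    proof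
      assume "x \<otimes> k \<in> pw (Suc h)"
      moreover have "x \<otimes> k = x0 \<otimes> (k0 \<otimes> k)" using x_def x0C k0C pdom_carrier[OF pm kd] by (simp add: m_assoc)
      moreover have "k0 \<otimes> k \<in> pdom \<Gamma>" using pdom_mult[OF pm k0(1) kd] .
      ultimately have "Suc h \<in> H" unfolding H_def by auto
      then show False using hmax by fastforce
    qed
    have "x [^] p = x0 [^] p \<otimes> k0 [^] p" using x_def x0C k0C by (simp add: nat_pow_distrib)
    moreover have "k0 [^] p \<in> pdom \<Gamma>" using pdom_pow[OF pm k0(1), of "int p"] by (simp only: int_pow_int)
    ultimately have xp: "x [^] p \<in> pdom \<Gamma>" using pdom_mult[OF pm x0p] by simp
    then have xp': "x [^] (int p) \<in> pdom \<Gamma>" by (simp only: int_pow_int)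
    obtain N' where N': "x [^] (p ^ N') = \<one>" using ptor xC by blast
    have "p ^ N' > 0" using p_gt1 by simp
    then obtain m where m: "m > 0" "\<And>i::int. x [^] i \<in> pdom \<Gamma> \<longleftrightarrow> int m dvd i"
      using min_exp[OF pm xC _ N'] by blast
    have "int m dvd int p" using m(2) xp' by blast
    then have "m dvd p" by (simp only: of_nat_dvd_iff)
    moreover have "m \<noteq> 1" using m(2)[of 1] xnd xC by auto
    ultimately have mp: "m = p" using pp prime_nat_iff by blast
    obtain w where w: "(x [^] (int p), w) \<in> \<Gamma>" using xp' pdom_def by blast
    have "x [^] (p ^ 1) \<in> pw (h + 1)" using pw_pow[OF xh] .
    then have "x [^] (int p) \<in> pw (Suc h)" by (simp only: int_pow_int power_one_right Suc_eq_plus1)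
    then have "w \<in> bp b (Suc h)" using q w Q_def by blast
    then obtain s where s: "w = b [^] (int (p ^ Suc h) * s)" using bp_def by blast
    define d where "d = b [^] (int (p ^ h) * s)"
    have dC: "d \<in> carrier G" using d_def b(1) by simp
    have dh: "d \<in> bp b h" using d_def bp_def by blast
    have "d [^] (int p) = b [^] (int (p ^ h) * s * int p)" using d_def b(1) by (simp add: int_pow_pow)
    also have "int (p ^ h) * s * int p = int (p ^ Suc h) * s" by (simp add: mult.commute mult.left_commute)
    finally have dp: "d [^] (int p) = w" using s by simp
    have dv: "\<And>i::int. x [^] i \<in> pdom \<Gamma> \<Longrightarrow> int p dvd i" using m(2) mp by blast
    have xm: "(x [^] (int p), d [^] (int p)) \<in> \<Gamma>" using w dp by simp
    note E = pext[OF pm xC dC dv xm]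
    have "(x,d) \<notin> \<Gamma>" using xnd pdom_def by blast
    then have strict: "\<Gamma> \<subset> pext \<Gamma> x d" using E(2,3) by blast
    have qE: "Q k y" if kyE: "(k,y) \<in> pext \<Gamma> x d" for k y
      unfolding Q_def
    proof (intro allI impI)
      fix j assume kj: "k \<in> pw j"
      obtain k1 a1 i where e1: "(k1,a1) \<in> \<Gamma>" "k = k1 \<otimes> x [^] i" "y = a1 \<otimes> d [^] (i::int)"
        using kyE unfolding pext_def by blast
      have k1C: "k1 \<in> carrier G" and a1C: "a1 \<in> carrier G" using pmap_carrier[OF pm e1(1)] by auto
      show "y \<in> bp b j"
      proof (cases "int p dvd i")
        case True
        then obtain c where c: "i = int p * c" by (meson dvdE)
        have "((x [^] (int p)) [^] c, w [^] c) \<in> \<Gamma>" using pmap_pow[OF pm w] .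
        then have "(k1 \<otimes> (x [^] (int p)) [^] c, a1 \<otimes> w [^] c) \<in> \<Gamma>" using pmap_mult[OF pm e1(1)] by blast
        moreover have "(x [^] (int p)) [^] c = x [^] i" using c xC by (simp add: int_pow_pow)
        moreover have "w [^] c = d [^] i" using c dC dp[symmetric] by (simp add: int_pow_pow)
        ultimately have "(k, y) \<in> \<Gamma>" using e1 by simp
        then show ?thesis using q kj Q_def by blast
      next
        case False
        then have "coprime (int p) i" using pp by (simp add: prime_imp_coprime_int)
        then have g1: "gcd i (int p) = 1" by (simp add: coprime_iff_gcd_eq_1 gcd.commute)
        obtain s' t' where st: "s' * i + t' * int p = gcd i (int p)" using bezout_int by blast
        have xiC: "x [^] i \<in> carrier G" using xC by simp
        have jh: "j \<le> h"
        proof (rule ccontr)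
          assume "\<not> j \<le> h"
          then have "k \<in> pw (Suc h)" using kj pw_mono by simp
          then have "k [^] s' \<in> pw (Suc h)" using pw_ipow by blast
          moreover have "k [^] s' = x \<otimes> (k1 [^] s' \<otimes> (x [^] (int p)) [^] (- t'))"
          proof -
            have "k [^] s' = k1 [^] s' \<otimes> x [^] (i * s')" using e1(2) k1C xC by (simp add: int_pow_distrib int_pow_pow)
            also have "i * s' = 1 + int p * (- t')" using st g1 by (simp add: algebra_simps)
            also have "x [^] (1 + int p * (- t')) = x [^] (1::int) \<otimes> x [^] (int p * (- t'))"
              using xC by (rule int_pow_mult)
            also have "\<dots> = x \<otimes> (x [^] (int p)) [^] (- t')"
              using xC by (simp only: int_pow_pow int_pow_1)
            finally show ?thesis using k1C xC by (simp add: m_ac)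
          qed
          moreover have "k1 [^] s' \<otimes> (x [^] (int p)) [^] (- t') \<in> pdom \<Gamma>"
          proof -
            have "k1 \<in> pdom \<Gamma>" using e1(1) pdom_def by blast
            then show ?thesis using pdom_mult[OF pm pdom_pow[OF pm] pdom_pow[OF pm xp']] by blast
          qed
          ultimately show False using xmax by auto
        qed
        have "x [^] i \<in> pw h" using pw_ipow[OF xh] .
        then have xij: "x [^] i \<in> pw j" using pw_mono jh by blast
        have "k \<otimes> inv (x [^] i) \<in> pw j" using pw_mult[OF kj pw_inv[OF xij]] .
        moreover have "k \<otimes> inv (x [^] i) = k1" using e1(2) k1C xiC by (simp add: m_assoc)
        ultimately have "k1 \<in> pw j" by simp
        then have "a1 \<in> bp b j" using q e1(1) Q_def by blast
        moreover have "d [^] i \<in> bp b j" using bp_ipow[OF b(1) dh] bp_mono[OF b(1)] jh by blast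
        ultimately show ?thesis using e1(3) bp_mult[OF b(1)] by blast
      qed
    qed
    show "\<exists>\<Gamma>'. pmap \<Gamma>' \<and> \<Gamma> \<subset> \<Gamma>' \<and> (\<forall>k y. (k,y) \<in> \<Gamma>' \<longrightarrow> Q k y)"
      using E(1) strict qE by blast
  qed
  then obtain f where f: "f \<in> hom G G" "\<And>x. x \<in> carrier G \<Longrightarrow> Q x (f x)"
    "\<And>k y. (k,y) \<in> \<Gamma>0 \<Longrightarrow> f k = y" by blast
  show ?thesis
  proof (intro bexI conjI ballI allI)
    show "f \<in> hom G G" by (rule f(1))
  next
    fix x assume "x \<in> carrier G"
    then have "f x \<in> bp b 0" using f(2) pw0 Q_def by blast
    then show "f x \<in> cyc b" using bp0 by blast
  next
    fix i :: int
    have "(b [^] i \<otimes> \<one>, b [^] i) \<in> \<Gamma>0" unfolding \<Gamma>0_def using pw_one by blast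
    then show "f (b [^] i) = b [^] i" using f(3) b(1) by simp
  qed
qed

end

context pgrp begin

lemma caseND:
  assumes CE: "centrally_essential (End_ring G)"
    and nd: "\<not> (\<forall>x\<in>carrier G. \<exists>y\<in>carrier G. y [^] p = x)"
  shows "\<exists>a\<in>carrier G. a [^] p = \<one> \<and> a \<noteq> \<one> \<and> (\<forall>v\<in>carrier G. v [^] p = \<one> \<longrightarrow> v \<in> cyc a)"
proof -
  have "\<exists>a j. a \<in> carrier G \<and> a [^] p = \<one> \<and> a \<notin> pw j"
  proof (rule ccontr)
    assume "\<not> (\<exists>a j. a \<in> carrier G \<and> a [^] p = \<one> \<and> a \<notin> pw j)"
    then have "\<And>a j. a \<in> carrier G \<Longrightarrow> a [^] p = \<one> \<Longrightarrow> a \<in> pw j" by blast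
    then have "\<forall>x\<in>carrier G. \<exists>y\<in>carrier G. y [^] p = x" using div_crit by blast
    then show False using nd by blast
  qed
  then obtain a j0 where a: "a \<in> carrier G" "a [^] p = \<one>" "a \<notin> pw j0" by blast
  have a1: "a \<noteq> \<one>" using a(3) pw_one by blast
  define J where "J = (LEAST j. a \<notin> pw j)"
  have J1: "a \<notin> pw J" using a(3) J_def by (metis LeastI)
  have J2: "\<And>j. j < J \<Longrightarrow> a \<in> pw j" using J_def not_less_Least by blast
  have "J \<noteq> 0"
  proof
    assume "J = 0" then show False using J1 pw0[OF a(1)] by simp
  qed
  then obtain n where n: "J = Suc n" using not0_implies_Suc by blast
  have "a \<in> pw n" using J2 n by simp
  then obtain b where b: "b \<in> carrier G" "a = b [^] (p ^ n)" using pw_def by blast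
  have ab: "a \<notin> pw (Suc n)" using J1 n by simp
  have ordb: "ord b = p ^ Suc n"
  proof (rule ord_exact[OF b(1)])
    have "b [^] (p ^ Suc n) = b [^] (p ^ n * p)" by (simp add: mult.commute)
    also have "\<dots> = (b [^] (p ^ n)) [^] p" using b(1) by (simp only: nat_pow_pow)
    finally show "b [^] (p ^ Suc n) = \<one>" using b(2) a(2) by simp
    show "b [^] (p ^ n) \<noteq> \<one>" using b(2) a1 by simp
  qed
  obtain e where e: "e \<in> hom G G" "\<And>x. x \<in> carrier G \<Longrightarrow> e x \<in> cyc b" "\<And>i::int. e (b [^] i) = b [^] i"
    using proj_ND[OF b(1) ordb] ab b(2) by blast
  have eidem: "e (e x) = e x" if hx: "x \<in> carrier G" for x
  proof -
    obtain i where "e x = b [^] (i::int)" using e(2)[OF hx] cyc_def by blast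
    then show ?thesis using e(3) by simp
  qed
  have aint: "a = b [^] (int (p ^ n))" using b(2) by (simp only: int_pow_int)
  have cycp: "y \<in> cyc a" if hy: "y \<in> cyc b" "y [^] p = \<one>" for y
  proof -
    obtain i where y: "y = b [^] (i::int)" using hy cyc_def by blast
    have "y [^] (int p) = \<one>" using hy(2) by (simp only: int_pow_int)
    then have "b [^] (i * int p) = \<one>" using y b(1) by (simp add: int_pow_pow)
    then have "int (p ^ Suc n) dvd i * int p" using pow_one_iff[OF b(1)] ordb by simp
    then have "int (p ^ n) * int p dvd i * int p" by (simp add: mult.commute)
    then have "int (p ^ n) dvd i" using p_gt1 by (simp add: dvd_mult_cancel_right)
    then obtain t where t: "i = int (p ^ n) * t" by (meson dvdE)
    have "y = (b [^] (int (p ^ n))) [^] t" using y t b(1) by (simp add: int_pow_pow)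
    then have "y = a [^] t" using aint by simp
    then show ?thesis using cyc_def by blast
  qed
  have "\<forall>v\<in>carrier G. v [^] p = \<one> \<longrightarrow> v \<in> cyc a"
  proof (intro ballI impI, rule ccontr)
    fix v assume v: "v \<in> carrier G" "v [^] p = \<one>" and va: "v \<notin> cyc a"
    have evC: "e v \<in> carrier G" using hom_in[OF e(1) v(1)] .
    have evp: "e v [^] p = \<one>" using hom_npow[OF e(1) v(1), of p, symmetric] v(2) hom_one'[OF e(1)] by simp
    then have evu: "e v \<in> cyc a" using cycp e(2) v(1) by blast
    define c where "c = v \<otimes> inv (e v)"
    have cC: "c \<in> carrier G" using c_def v(1) evC by simp
    have c1: "c \<noteq> \<one>"
    proof
      assume "c = \<one>" then have "v = e v" using div_one_eq[OF v(1) evC] c_def by simp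
      then show False using va evu by simp
    qed
    have "c [^] p = v [^] p \<otimes> inv (e v [^] p)" using c_def v(1) evC by (simp add: nat_pow_distrib nat_pow_inv)
    then have cp: "c [^] p = \<one>" using v(2) evp by simp
    have ordc: "ord c = p" using ord_p[OF cC cp c1] .
    have ec: "e c = \<one>" using c_def v(1) evC hom_mult'[OF e(1)] hom_inv'[OF e(1)] eidem by simp
    define g where "g = (\<lambda>x. c [^] (SOME i::int. e x = b [^] i))"
    have gl: "g x = c [^] i" if hx: "x \<in> carrier G" "e x = b [^] (i::int)" for x i
    proof -
      define i' where "i' = (SOME i::int. e x = b [^] i)"
      have ei': "e x = b [^] i'" unfolding i'_def by (rule someI[of _ i]) (rule hx(2))
      then have "b [^] i = b [^] i'" using hx by simp
      then have "int (ord b) dvd i' - i" using int_pow_eq[OF b(1)] by simp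
      moreover have "int p dvd int (ord b)" using ordb by simp
      ultimately have "int p dvd i' - i" using dvd_trans by blast
      then have "c [^] i = c [^] i'" using int_pow_eq[OF cC] ordc by simp
      then show ?thesis using g_def i'_def by simp
    qed
    have gh: "g \<in> hom G G"
    proof (rule homI)
      fix x assume "x \<in> carrier G" then show "g x \<in> carrier G" using g_def cC by simp
    next
      fix x y assume xy: "x \<in> carrier G" "y \<in> carrier G"
      obtain ix where ix: "e x = b [^] (ix::int)" using e(2)[OF xy(1)] cyc_def by blast
      obtain iy where iy: "e y = b [^] (iy::int)" using e(2)[OF xy(2)] cyc_def by blast
      have "e (x \<otimes> y) = b [^] (ix + iy)" using ix iy xy hom_mult'[OF e(1)] b(1) by (simp add: int_pow_mult)
      then have "g (x \<otimes> y) = c [^] (ix + iy)" using gl xy by simp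
      also have "\<dots> = c [^] ix \<otimes> c [^] iy" using cC by (rule int_pow_mult)
      finally show "g (x \<otimes> y) = g x \<otimes> g y" using gl[OF xy(1) ix] gl[OF xy(2) iy] by simp
    qed
    have eb: "e b = b [^] (1::int)" using e(3)[of 1] b(1) by simp
    then have gb: "g b = c" using gl[OF b(1) eb] cC by simp
    have "e (g b) = g (e b)" using idem_comm[OF CE e(1) eidem gh b(1)] .
    then have "e c = g b" using gb eb b(1) by simp
    then show False using ec gb c1 by simp
  qed
  then show ?thesis using a a1 by blast
qed

lemma socle_cyclic:
  assumes CE: "centrally_essential (End_ring G)" and nt: "carrier G \<noteq> {\<one>}"
  shows "\<exists>a\<in>carrier G. a [^] p = \<one> \<and> a \<noteq> \<one> \<and> (\<forall>v\<in>carrier G. v [^] p = \<one> \<longrightarrow> v \<in> cyc a)"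
proof (cases "\<forall>x\<in>carrier G. \<exists>y\<in>carrier G. y [^] p = x")
  case True
  obtain x where "x \<in> carrier G" "x \<noteq> \<one>" using nt one_closed by blast
  then obtain a where a: "a \<in> carrier G" "a [^] p = \<one>" "a \<noteq> \<one>" using exists_order_p by blast
  have "\<forall>v\<in>carrier G. v [^] p = \<one> \<longrightarrow> v \<in> cyc a" using caseD[OF CE _ a] True by blast
  then show ?thesis using a by blast
next
  case False
  then show ?thesis using caseND[OF CE] by blast
qed

end

context pgrp begin

lemma cyc_trans: assumes "y \<in> cyc u" "u \<in> cyc w" "w \<in> carrier G" shows "y \<in> cyc w"
proof -
  obtain i where i: "y = u [^] (i::int)" using assms(1) cyc_def by blast
  obtain j where j: "u = w [^] (j::int)" using assms(2) cyc_def by blast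
  have "y = w [^] (j * i)" using i j assms(3) by (simp add: int_pow_pow)
  then show ?thesis using cyc_def by blast
qed

lemma in_cyc:
  assumes soc: "a \<in> carrier G" "a [^] p = \<one>" "\<And>v. v \<in> carrier G \<Longrightarrow> v [^] p = \<one> \<Longrightarrow> v \<in> cyc a"
    and g: "g \<in> carrier G" "ord g = p ^ Suc k"
    and x: "x \<in> carrier G" "x [^] (p ^ Suc k) = \<one>"
  shows "x \<in> cyc g"
proof -
  define u where "u = g [^] (p ^ k)"
  have uC: "u \<in> carrier G" using u_def g by simp
  have "u [^] p = g [^] (p ^ k * p)" using u_def g(1) by (simp only: nat_pow_pow)
  then have up: "u [^] p = \<one>" using g pow_eq_id by (simp add: mult.commute)
  have "\<not> p ^ Suc k dvd p ^ k" using p_gt1 power_dvd_imp_le by fastforce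
  then have u1: "u \<noteq> \<one>" using u_def g pow_eq_id by simp
  have au: "a \<in> cyc u" using cyc_inv[OF uC up u1 soc(1) soc(3)[OF uC up] soc(2)] .
  have uint: "u = g [^] (int (p ^ k))" using u_def by (simp only: int_pow_int)
  have claim: "\<forall>x\<in>carrier G. x [^] (p ^ m) = \<one> \<longrightarrow> x \<in> cyc g" if "m \<le> Suc k" for m
    using that
  proof (induction m)
    case 0
    show ?case
    proof (intro ballI impI)
      fix x assume "x \<in> carrier G" "x [^] (p ^ 0) = \<one>"
      then have "x = g [^] (0::int)" by simp
      then show "x \<in> cyc g" using cyc_def by blast
    qed
  next
    case (Suc m)
    then have mk: "m \<le> k" by simp
    show ?case
    proof (intro ballI impI)
      fix x assume xc: "x \<in> carrier G" and xm: "x [^] (p ^ Suc m) = \<one>"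
      define w where "w = x [^] (p ^ m)"
      have wC: "w \<in> carrier G" using w_def xc by simp
      have "w [^] p = x [^] (p ^ m * p)" using w_def xc by (simp only: nat_pow_pow)
      then have wp: "w [^] p = \<one>" using xm by (simp add: mult.commute)
      have "w \<in> cyc u" using cyc_trans[OF soc(3)[OF wC wp] au uC] .
      then obtain c where c: "w = u [^] (c::int)" using cyc_def by blast
      then have wc: "w = g [^] (int (p ^ k) * c)" using uint g(1) by (simp add: int_pow_pow)
      define y where "y = g [^] (int (p ^ (k - m)) * c)"
      have yC: "y \<in> carrier G" using y_def g(1) by simp
      have "y [^] (p ^ m) = y [^] (int (p ^ m))" by (simp only: int_pow_int)
      also have "\<dots> = g [^] (int (p ^ (k - m)) * c * int (p ^ m))" using y_def g(1) by (simp only: int_pow_pow)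
      also have "int (p ^ (k - m)) * c * int (p ^ m) = int (p ^ k) * c"
      proof -
        have "p ^ (k - m) * p ^ m = p ^ k" using mk by (simp add: power_add[symmetric])
        then have "int (p ^ (k - m)) * int (p ^ m) = int (p ^ k)" by (metis of_nat_mult)
        then show ?thesis by (metis mult.commute mult.left_commute)
      qed
      finally have yw: "y [^] (p ^ m) = w" using wc by simp
      define z where "z = x \<otimes> inv y"
      have zC: "z \<in> carrier G" using z_def xc yC by simp
      have "z [^] (p ^ m) = x [^] (p ^ m) \<otimes> inv (y [^] (p ^ m))"
        using z_def xc yC by (simp add: nat_pow_distrib nat_pow_inv)
      then have "z [^] (p ^ m) = \<one>" using yw w_def wC by simp
      then have "z \<in> cyc g" using Suc.IH Suc.prems zC by simp
      then obtain j where j: "z = g [^] (j::int)" using cyc_def by blast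
      have "x = z \<otimes> y" using z_def xc yC by (simp add: m_assoc)
      also have "\<dots> = g [^] (j + int (p ^ (k - m)) * c)" using j y_def g(1) by (simp add: int_pow_mult)
      finally show "x \<in> cyc g" using cyc_def by blast
    qed
  qed
  show ?thesis using claim[of "Suc k"] x by simp
qed

lemma bounded_iso:
  assumes soc: "a \<in> carrier G" "a [^] p = \<one>" "\<And>v. v \<in> carrier G \<Longrightarrow> v [^] p = \<one> \<Longrightarrow> v \<in> cyc a"
    and nt: "carrier G \<noteq> {\<one>}"
    and bd: "\<exists>N. \<forall>x\<in>carrier G. x [^] (p ^ N) = \<one>"
  shows "\<exists>k>0. G \<cong> integer_mod_group (p ^ k)"
proof -
  define K where "K = (LEAST N. \<forall>x\<in>carrier G. x [^] (p ^ N) = \<one>)"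
  have K1: "\<forall>x\<in>carrier G. x [^] (p ^ K) = \<one>" using bd unfolding K_def by (rule LeastI_ex)
  have K2: "\<And>N. N < K \<Longrightarrow> \<not> (\<forall>x\<in>carrier G. x [^] (p ^ N) = \<one>)" unfolding K_def by (rule not_less_Least)
  have "K \<noteq> 0"
  proof
    assume "K = 0"
    then have "\<forall>x\<in>carrier G. x = \<one>" using K1 by simp
    then show False using nt one_closed by blast
  qed
  then obtain k where k: "K = Suc k" using not0_implies_Suc by blast
  obtain g where g: "g \<in> carrier G" "g [^] (p ^ k) \<noteq> \<one>" using K2[of k] k by blast
  have og: "ord g = p ^ Suc k" using ord_exact[OF g(1) _ g(2)] K1 k g(1) by simp
  have allc: "x \<in> cyc g" if "x \<in> carrier G" for x using in_cyc[OF soc g(1) og that] K1 k that by simp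
  define M where "M = p ^ Suc k"
  have M0: "M > 0" using M_def p_gt1 by simp
  define \<phi> where "\<phi> = (\<lambda>i::int. g [^] i)"
  have phi_mod: "\<phi> (i mod int M) = \<phi> i" for i
  proof -
    have "int (ord g) dvd i - i mod int M" using og M_def by (simp add: minus_mod_eq_mult_div)
    then show ?thesis unfolding \<phi>_def using int_pow_eq[OF g(1)] by simp
  qed
  have cZ: "carrier (integer_mod_group M) = {0..<int M}" using M0 by (simp add: carrier_integer_mod_group)
  have hom: "\<phi> \<in> hom (integer_mod_group M) G"
  proof (rule homI)
    fix i assume "i \<in> carrier (integer_mod_group M)" then show "\<phi> i \<in> carrier G" using \<phi>_def g(1) by simp
  next
    fix i j assume "i \<in> carrier (integer_mod_group M)" "j \<in> carrier (integer_mod_group M)"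
    have "\<phi> (i \<otimes>\<^bsub>integer_mod_group M\<^esub> j) = \<phi> ((i + j) mod int M)" by simp
    also have "\<dots> = \<phi> (i + j)" by (rule phi_mod)
    also have "\<dots> = \<phi> i \<otimes> \<phi> j" unfolding \<phi>_def using g(1) by (rule int_pow_mult)
    finally show "\<phi> (i \<otimes>\<^bsub>integer_mod_group M\<^esub> j) = \<phi> i \<otimes> \<phi> j" .
  qed
  have bij: "bij_betw \<phi> (carrier (integer_mod_group M)) (carrier G)"
    unfolding bij_betw_def
  proof
    show "inj_on \<phi> (carrier (integer_mod_group M))"
    proof (rule inj_onI)
      fix i j assume ij: "i \<in> carrier (integer_mod_group M)" "j \<in> carrier (integer_mod_group M)" "\<phi> i = \<phi> j"
      then have "int M dvd j - i" using int_pow_eq[OF g(1)] og M_def \<phi>_def by simp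
      moreover have "0 \<le> i" "i < int M" "0 \<le> j" "j < int M" using ij cZ by auto
      ultimately show "i = j"
      proof -
        assume d: "int M dvd j - i" and r: "0 \<le> i" "i < int M" "0 \<le> j" "j < int M"
        show "i = j"
        proof (rule ccontr)
          assume "i \<noteq> j" then have "j - i \<noteq> 0" by simp
          then have "\<bar>int M\<bar> \<le> \<bar>j - i\<bar>" using dvd_imp_le_int d by blast
          then show False using r by linarith
        qed
      qed
    qed
    show "\<phi> ` carrier (integer_mod_group M) = carrier G"
    proof
      show "\<phi> ` carrier (integer_mod_group M) \<subseteq> carrier G" using \<phi>_def g(1) by auto
      show "carrier G \<subseteq> \<phi> ` carrier (integer_mod_group M)"
      proof
        fix x assume "x \<in> carrier G"
        then obtain i where "x = g [^] (i::int)" using allc cyc_def by blast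
        then have "x = \<phi> (i mod int M)" using phi_mod \<phi>_def by simp
        moreover have "i mod int M \<in> carrier (integer_mod_group M)" using cZ M0 by simp
        ultimately show "x \<in> \<phi> ` carrier (integer_mod_group M)" by blast
      qed
    qed
  qed
  have "integer_mod_group M \<cong> G" using hom bij by (auto intro: is_isoI isoI)
  then have "G \<cong> integer_mod_group M" using group.iso_sym[OF group_integer_mod_group] by blast
  then show ?thesis using M_def by blast
qed

end

context pgrp begin

lemma exists_exact:
  assumes ub: "\<And>N. \<exists>x\<in>carrier G. x [^] (p ^ N) \<noteq> \<one>"
  shows "\<exists>h\<in>carrier G. ord h = p ^ Suc n"
proof -
  obtain x where x: "x \<in> carrier G" "x [^] (p ^ n) \<noteq> \<one>" using ub by blast
  obtain M where M: "ord x = p ^ M" using ord_pp x(1) by blast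
  have "\<not> M \<le> n"
  proof
    assume "M \<le> n" then have "ord x dvd p ^ n" using M by (simp add: le_imp_power_dvd)
    then show False using x pow_eq_id by blast
  qed
  then have Mn: "M = Suc n + (M - Suc n)" by simp
  define h where "h = x [^] (p ^ (M - Suc n))"
  have hC: "h \<in> carrier G" using h_def x(1) by simp
  have "h [^] (p ^ Suc n) = x [^] (p ^ (M - Suc n) * p ^ Suc n)" using h_def x(1) by (simp only: nat_pow_pow)
  also have "p ^ (M - Suc n) * p ^ Suc n = p ^ M" using Mn by (metis add.commute power_add)
  finally have h1: "h [^] (p ^ Suc n) = \<one>" using M x(1) pow_eq_id by simp
  have "h [^] (p ^ n) = x [^] (p ^ (M - Suc n) * p ^ n)" using h_def x(1) by (simp only: nat_pow_pow)
  also have "p ^ (M - Suc n) * p ^ n = p ^ (M - 1)" using Mn by (metis add.commute add_diff_cancel_left' diff_Suc_1 plus_1_eq_Suc power_add add_Suc)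
  finally have "h [^] (p ^ n) = x [^] (p ^ (M - 1))" .
  moreover have "\<not> p ^ M dvd p ^ (M - 1)" using p_gt1 power_dvd_imp_le Mn by fastforce
  ultimately have h2: "h [^] (p ^ n) \<noteq> \<one>" using M x(1) pow_eq_id by simp
  show ?thesis using ord_exact[OF hC h1 h2] hC by blast
qed

lemma next_chain:
  assumes soc: "a \<in> carrier G" "a [^] p = \<one>" "\<And>v. v \<in> carrier G \<Longrightarrow> v [^] p = \<one> \<Longrightarrow> v \<in> cyc a"
    and ub: "\<And>N. \<exists>x\<in>carrier G. x [^] (p ^ N) \<noteq> \<one>"
    and y: "y \<in> carrier G" "ord y = p ^ n"
  shows "\<exists>z. z \<in> carrier G \<and> ord z = p ^ Suc n \<and> z [^] p = y"
proof (cases n)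
  case 0
  then have "y = \<one>" using y ord_eq_1 by simp
  obtain h where h: "h \<in> carrier G" "ord h = p ^ Suc 0" using exists_exact[OF ub] by blast
  have "h [^] p = \<one>" using h pow_eq_id by simp
  then show ?thesis using h 0 \<open>y = \<one>\<close> by auto
next
  case (Suc n')
  obtain h where h: "h \<in> carrier G" "ord h = p ^ Suc n" using exists_exact[OF ub] by blast
  define hp where "hp = h [^] p"
  have hpC: "hp \<in> carrier G" using hp_def h(1) by simp
  have "hp [^] (p ^ n) = h [^] (p * p ^ n)" using hp_def h(1) by (simp only: nat_pow_pow)
  then have hp1: "hp [^] (p ^ Suc n') = \<one>" using h pow_eq_id Suc by simp
  have "hp [^] (p ^ n') = h [^] (p * p ^ n')" using hp_def h(1) by (simp only: nat_pow_pow)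
  moreover have "\<not> p ^ Suc n dvd p * p ^ n'" using p_gt1 power_dvd_imp_le Suc by fastforce
  ultimately have hp2: "hp [^] (p ^ n') \<noteq> \<one>" using h pow_eq_id by simp
  have ohp: "ord hp = p ^ Suc n'" using ord_exact[OF hpC hp1 hp2] .
  have "y [^] (p ^ Suc n') = \<one>" using y pow_eq_id Suc by simp
  then have "y \<in> cyc hp" using in_cyc[OF soc hpC ohp y(1)] by simp
  then obtain c where c: "y = hp [^] (c::int)" using cyc_def by blast
  define z where "z = h [^] c"
  have zC: "z \<in> carrier G" using z_def h(1) by simp
  have "z [^] p = z [^] (int p)" by (simp only: int_pow_int)
  also have "\<dots> = h [^] (c * int p)" using z_def h(1) by (simp only: int_pow_pow)
  also have "\<dots> = (h [^] (int p)) [^] c" using h(1) by (simp only: int_pow_pow mult.commute)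
  also have "\<dots> = y" using c hp_def by (simp only: int_pow_int)
  finally have zp: "z [^] p = y" .
  have "z [^] (p ^ Suc n) = (z [^] p) [^] (p ^ n)" using zC by (simp add: nat_pow_pow)
  then have z1: "z [^] (p ^ Suc n) = \<one>" using zp y pow_eq_id by simp
  have "z [^] (p ^ n) = (z [^] p) [^] (p ^ n')" using zC Suc by (simp add: nat_pow_pow)
  moreover have "\<not> p ^ n dvd p ^ n'" using p_gt1 power_dvd_imp_le Suc by fastforce
  ultimately have z2: "z [^] (p ^ n) \<noteq> \<one>" using zp y pow_eq_id by simp
  show ?thesis using ord_exact[OF zC z1 z2] zC zp by blast
qed

lemma unbounded_chain:
  assumes soc: "a \<in> carrier G" "a [^] p = \<one>" "\<And>v. v \<in> carrier G \<Longrightarrow> v [^] p = \<one> \<Longrightarrow> v \<in> cyc a"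
    and ub: "\<And>N. \<exists>x\<in>carrier G. x [^] (p ^ N) \<noteq> \<one>"
  shows "\<exists>ch. (\<forall>n. ch n \<in> carrier G \<and> ord (ch n) = p ^ n \<and> ch (Suc n) [^] p = ch n)
     \<and> (\<forall>x\<in>carrier G. \<exists>n (j::nat). x = ch n [^] j)"
proof -
  define ch where "ch = rec_nat \<one> (\<lambda>n y. SOME z. z \<in> carrier G \<and> ord z = p ^ Suc n \<and> z [^] p = y)"
  have c0: "ch 0 = \<one>" by (simp add: ch_def)
  have cS: "ch (Suc n) = (SOME z. z \<in> carrier G \<and> ord z = p ^ Suc n \<and> z [^] p = ch n)" for n
    by (simp add: ch_def)
  have A: "ch n \<in> carrier G \<and> ord (ch n) = p ^ n" for n
  proof (induction n)
    case 0 then show ?case using c0 by simp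
  next
    case (Suc n)
    have ex: "\<exists>z. z \<in> carrier G \<and> ord z = p ^ Suc n \<and> z [^] p = ch n"
      using next_chain[OF soc ub] Suc by blast
    show ?case using someI_ex[OF ex] cS[of n] by simp
  qed
  have B: "ch (Suc n) [^] p = ch n" for n
  proof -
    have ex: "\<exists>z. z \<in> carrier G \<and> ord z = p ^ Suc n \<and> z [^] p = ch n"
      using next_chain[OF soc ub] A by blast
    show ?thesis using someI_ex[OF ex] cS[of n] by simp
  qed
  have C: "\<exists>n (j::nat). x = ch n [^] j" if hx: "x \<in> carrier G" for x
  proof -
    obtain N where N: "x [^] (p ^ N) = \<one>" using ptor hx by blast
    show ?thesis
    proof (cases N)
      case 0
      then have "x = ch 0 [^] (0::nat)" using N hx c0 by simp
      then show ?thesis by blast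
    next
      case (Suc k)
      have "x \<in> cyc (ch N)" using in_cyc[OF soc _ _ hx] A N Suc by blast
      then obtain i where i: "x = ch N [^] (i::int)" using cyc_def by blast
      define M where "M = int (ord (ch N))"
      have "M > 0" using M_def A p_gt1 by simp
      have "i mod M - i = - (i div M * M)" using div_mult_mod_eq[of i M] by linarith
      then have "M dvd i mod M - i" by simp
      then have "ch N [^] i = ch N [^] (i mod M)"
        using int_pow_eq[of "ch N" i "i mod M"] A M_def by simp
      also have "\<dots> = ch N [^] (nat (i mod M))" using \<open>M > 0\<close> by simp
      finally show ?thesis using i by blast
    qed
  qed
  show ?thesis using A B C by blast
qed

end

context group begin

lemma chain_up:
  assumes cC: "\<And>n. c n \<in> carrier G" and cS: "\<And>n. c (Suc n) [^] (p::nat) = c n"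
  shows "c n = c (n + k) [^] (p ^ k)"
proof (induction k)
  case 0 then show ?case using cC by simp
next
  case (Suc k)
  have "c (n + Suc k) [^] (p ^ Suc k) = c (n + Suc k) [^] (p * p ^ k)" by simp
  also have "\<dots> = (c (n + Suc k) [^] p) [^] (p ^ k)" using cC by (simp only: nat_pow_pow)
  also have "\<dots> = c (n + k) [^] (p ^ k)" using cS[of "n + k"] by simp
  finally show ?case using Suc by simp
qed

lemma chain_pow:
  assumes cC: "\<And>n. c n \<in> carrier G" and cS: "\<And>n. c (Suc n) [^] (p::nat) = c n"
  shows "c n [^] (j::nat) = c (n + k) [^] (p ^ k * j)"
  using chain_up[of c p n k, OF cC cS] cC by (simp add: nat_pow_pow)

lemma npow_eq: "x \<in> carrier G \<Longrightarrow> x [^] (a::nat) = x [^] (b::nat) \<longleftrightarrow> int (ord x) dvd int b - int a"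
  using int_pow_eq[of x "int a" "int b"] by (simp add: int_pow_int)

lemma chain_eq:
  assumes cC: "\<And>n. c n \<in> carrier G" and cS: "\<And>n. c (Suc n) [^] (p::nat) = c n"
    and cO: "\<And>n. ord (c n) = p ^ n"
  shows "c n [^] (j::nat) = c m [^] (i::nat) \<longleftrightarrow> int (p ^ (n + m)) dvd int (p ^ n * i) - int (p ^ m * j)"
proof -
  have "c n [^] j = c (n + m) [^] (p ^ m * j)" using chain_pow[of c p n j m, OF cC cS] .
  moreover have "c m [^] i = c (n + m) [^] (p ^ n * i)" using chain_pow[of c p m i n, OF cC cS] by (simp add: add.commute)
  ultimately show ?thesis using npow_eq[OF cC] cO by simp
qed

end

lemma chain_iso:
  assumes G: "group G" and H: "group H"
    and cC: "\<And>n. c n \<in> carrier G" and cS: "\<And>n. c (Suc n) [^]\<^bsub>G\<^esub> (p::nat) = c n"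
    and cO: "\<And>n. group.ord G (c n) = p ^ n" and cA: "\<And>x. x \<in> carrier G \<Longrightarrow> \<exists>n (j::nat). x = c n [^]\<^bsub>G\<^esub> j"
    and dC: "\<And>n. d n \<in> carrier H" and dS: "\<And>n. d (Suc n) [^]\<^bsub>H\<^esub> p = d n"
    and dO: "\<And>n. group.ord H (d n) = p ^ n" and dA: "\<And>x. x \<in> carrier H \<Longrightarrow> \<exists>n (j::nat). x = d n [^]\<^bsub>H\<^esub> j"
  shows "G \<cong> H"
proof -
  interpret G: group G by (rule G)
  interpret H: group H by (rule H)
  have eqv: "c n [^]\<^bsub>G\<^esub> j = c m [^]\<^bsub>G\<^esub> i \<longleftrightarrow> d n [^]\<^bsub>H\<^esub> j = d m [^]\<^bsub>H\<^esub> i" for n m and i j :: nat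
    using G.chain_eq[OF cC cS cO] H.chain_eq[OF dC dS dO] by simp
  define \<Phi> where "\<Phi> = (\<lambda>x. let nj = (SOME nj. x = c (fst nj) [^]\<^bsub>G\<^esub> (snd nj :: nat)) in d (fst nj) [^]\<^bsub>H\<^esub> (snd nj))"
  have Phi: "\<Phi> x = d n [^]\<^bsub>H\<^esub> j" if hx: "x = c n [^]\<^bsub>G\<^esub> (j::nat)" for x n j
  proof -
    define nj where "nj = (SOME nj. x = c (fst nj) [^]\<^bsub>G\<^esub> (snd nj :: nat))"
    have "x = c (fst nj) [^]\<^bsub>G\<^esub> (snd nj)" unfolding nj_def
      by (rule someI[of _ "(n,j)"]) (simp add: hx)
    then have "d (fst nj) [^]\<^bsub>H\<^esub> (snd nj) = d n [^]\<^bsub>H\<^esub> j" using eqv hx by simp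
    then show ?thesis unfolding \<Phi>_def nj_def[symmetric] by (simp add: Let_def)
  qed
  have hom: "\<Phi> \<in> hom G H"
  proof (rule homI)
    fix x assume "x \<in> carrier G"
    then obtain n j where "x = c n [^]\<^bsub>G\<^esub> (j::nat)" using cA by blast
    then have "\<Phi> x = d n [^]\<^bsub>H\<^esub> j" by (rule Phi)
    then show "\<Phi> x \<in> carrier H" using dC by simp
  next
    fix x y assume xy: "x \<in> carrier G" "y \<in> carrier G"
    obtain n j where x: "x = c n [^]\<^bsub>G\<^esub> (j::nat)" using cA xy by blast
    obtain m i where y: "y = c m [^]\<^bsub>G\<^esub> (i::nat)" using cA xy by blast
    have x': "x = c (n + m) [^]\<^bsub>G\<^esub> (p ^ m * j)" using x G.chain_pow[of c p n j m, OF cC cS] by simp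
    have y': "y = c (n + m) [^]\<^bsub>G\<^esub> (p ^ n * i)" using y G.chain_pow[of c p m i n, OF cC cS] by (simp add: add.commute)
    have "x \<otimes>\<^bsub>G\<^esub> y = c (n + m) [^]\<^bsub>G\<^esub> (p ^ m * j + p ^ n * i)" using x' y' cC by (simp add: G.nat_pow_mult)
    then have "\<Phi> (x \<otimes>\<^bsub>G\<^esub> y) = d (n + m) [^]\<^bsub>H\<^esub> (p ^ m * j + p ^ n * i)" by (rule Phi)
    also have "\<dots> = d (n + m) [^]\<^bsub>H\<^esub> (p ^ m * j) \<otimes>\<^bsub>H\<^esub> d (n + m) [^]\<^bsub>H\<^esub> (p ^ n * i)"
      using dC by (simp add: H.nat_pow_mult)
    also have "\<dots> = d n [^]\<^bsub>H\<^esub> j \<otimes>\<^bsub>H\<^esub> d m [^]\<^bsub>H\<^esub> i"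
      using H.chain_pow[of d p n j m, OF dC dS] H.chain_pow[of d p m i n, OF dC dS] by (simp add: add.commute)
    finally show "\<Phi> (x \<otimes>\<^bsub>G\<^esub> y) = \<Phi> x \<otimes>\<^bsub>H\<^esub> \<Phi> y" using Phi[OF x] Phi[OF y] by simp
  qed
  have bij: "bij_betw \<Phi> (carrier G) (carrier H)" unfolding bij_betw_def
  proof
    show "inj_on \<Phi> (carrier G)"
    proof (rule inj_onI)
      fix x y assume xy: "x \<in> carrier G" "y \<in> carrier G" "\<Phi> x = \<Phi> y"
      obtain n j where x: "x = c n [^]\<^bsub>G\<^esub> (j::nat)" using cA xy by blast
      obtain m i where y: "y = c m [^]\<^bsub>G\<^esub> (i::nat)" using cA xy by blast
      have "d n [^]\<^bsub>H\<^esub> j = d m [^]\<^bsub>H\<^esub> i" using xy(3) Phi[OF x] Phi[OF y] by simp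
      then have "c n [^]\<^bsub>G\<^esub> j = c m [^]\<^bsub>G\<^esub> i" using eqv by blast
      then show "x = y" using x y by simp
    qed
    show "\<Phi> ` carrier G = carrier H"
    proof
      show "\<Phi> ` carrier G \<subseteq> carrier H"
      proof
        fix h assume "h \<in> \<Phi> ` carrier G"
        then obtain x where "x \<in> carrier G" "h = \<Phi> x" by blast
        then show "h \<in> carrier H" using hom_in_carrier[OF hom] by simp
      qed
      show "carrier H \<subseteq> \<Phi> ` carrier G"
      proof
        fix h assume "h \<in> carrier H"
        then obtain n j where h: "h = d n [^]\<^bsub>H\<^esub> (j::nat)" using dA by blast
        have "\<Phi> (c n [^]\<^bsub>G\<^esub> j) = h" using Phi[of "c n [^]\<^bsub>G\<^esub> j" n j] h by simp
        moreover have "c n [^]\<^bsub>G\<^esub> j \<in> carrier G" using cC by simp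
        ultimately show "h \<in> \<Phi> ` carrier G" by blast
      qed
    qed
  qed
  show ?thesis by (rule is_isoI, rule isoI[OF hom bij])
qed

lemma pruefer_pow: "pow (pruefer_group p) z (n::nat) = z ^ n"
  by (induction n) (simp_all add: pruefer_group_def power_Suc2)

lemma pruefer_one: "\<one>\<^bsub>pruefer_group p\<^esub> = 1"
  by (simp add: pruefer_group_def)

lemma pruefer_carrier: "z \<in> carrier (pruefer_group p) \<longleftrightarrow> (\<exists>n::nat. z ^ (p ^ n) = 1)"
  by (simp add: pruefer_group_def)

lemma pruefer_comm_group:
  assumes "p > 0" shows "comm_group (pruefer_group p)"
proof (rule comm_groupI)
  fix x y assume "x \<in> carrier (pruefer_group p)" "y \<in> carrier (pruefer_group p)"
  then obtain a b where a: "x ^ (p ^ a) = 1" and b: "y ^ (p ^ b) = 1" by (auto simp: pruefer_carrier)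
  have "(x * y) ^ (p ^ (a + b)) = (x ^ (p ^ a)) ^ (p ^ b) * (y ^ (p ^ b)) ^ (p ^ a)"
    by (simp add: power_mult_distrib power_add power_mult[symmetric] mult.commute)
  then have "(x * y) ^ (p ^ (a + b)) = 1" using a b by simp
  then show "x \<otimes>\<^bsub>pruefer_group p\<^esub> y \<in> carrier (pruefer_group p)"
    by (auto simp: pruefer_carrier pruefer_group_def)
next
  show "\<one>\<^bsub>pruefer_group p\<^esub> \<in> carrier (pruefer_group p)" by (simp add: pruefer_group_def)
next
  fix x y z show "x \<otimes>\<^bsub>pruefer_group p\<^esub> y \<otimes>\<^bsub>pruefer_group p\<^esub> z = x \<otimes>\<^bsub>pruefer_group p\<^esub> (y \<otimes>\<^bsub>pruefer_group p\<^esub> z)"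
    by (simp add: pruefer_group_def mult.assoc)
next
  fix x y show "x \<otimes>\<^bsub>pruefer_group p\<^esub> y = y \<otimes>\<^bsub>pruefer_group p\<^esub> x"
    by (simp add: pruefer_group_def mult.commute)
next
  fix x show "\<one>\<^bsub>pruefer_group p\<^esub> \<otimes>\<^bsub>pruefer_group p\<^esub> x = x" by (simp add: pruefer_group_def)
next
  fix x assume "x \<in> carrier (pruefer_group p)"
  then obtain a where a: "x ^ (p ^ a) = 1" by (auto simp: pruefer_carrier)
  have x0: "x \<noteq> 0"
  proof
    assume "x = 0" then have "x ^ (p ^ a) = 0" using assms by simp
    then show False using a by simp
  qed
  have "inverse x ^ (p ^ a) = 1" using a by (simp add: power_inverse)
  then have "inverse x \<in> carrier (pruefer_group p)" by (auto simp: pruefer_carrier)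
  moreover have "inverse x \<otimes>\<^bsub>pruefer_group p\<^esub> x = \<one>\<^bsub>pruefer_group p\<^esub>"
    using x0 by (simp add: pruefer_group_def)
  ultimately show "\<exists>y\<in>carrier (pruefer_group p). y \<otimes>\<^bsub>pruefer_group p\<^esub> x = \<one>\<^bsub>pruefer_group p\<^esub>" by blast
qed

lemma pruefer_chain:
  assumes p1: "p > (1::nat)"
  defines "\<omega> \<equiv> \<lambda>n::nat. cis (2 * pi / real (p ^ n))"
  shows "\<And>n. \<omega> n \<in> carrier (pruefer_group p)"
    "\<And>n. \<omega> (Suc n) [^]\<^bsub>pruefer_group p\<^esub> p = \<omega> n"
    "\<And>n. group.ord (pruefer_group p) (\<omega> n) = p ^ n"
    "\<And>z. z \<in> carrier (pruefer_group p) \<Longrightarrow> \<exists>n (j::nat). z = \<omega> n [^]\<^bsub>pruefer_group p\<^esub> j"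
proof -
  interpret P: comm_group "pruefer_group p" using pruefer_comm_group p1 by simp
  have pw: "\<omega> n ^ k = cis (2 * pi * real k / real (p ^ n))" for n k
    unfolding \<omega>_def by (simp add: DeMoivre mult.commute)
  have w1: "\<omega> n ^ (p ^ n) = 1" for n using pw[of n "p ^ n"] p1 by simp
  show wC: "\<omega> n \<in> carrier (pruefer_group p)" for n using w1 pruefer_carrier by blast
  show "\<omega> (Suc n) [^]\<^bsub>pruefer_group p\<^esub> p = \<omega> n" for n
  proof -
    have "\<omega> (Suc n) [^]\<^bsub>pruefer_group p\<^esub> p = cis (2 * pi * real p / real (p ^ Suc n))"
      using pw by (simp add: pruefer_pow)
    also have "2 * pi * real p / real (p ^ Suc n) = 2 * pi / real (p ^ n)" using p1 by (simp add: field_simps)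
    finally show ?thesis unfolding \<omega>_def by simp
  qed
  show "group.ord (pruefer_group p) (\<omega> n) = p ^ n" for n
  proof -
    have "\<omega> n [^]\<^bsub>pruefer_group p\<^esub> (p ^ n) = \<one>\<^bsub>pruefer_group p\<^esub>" using w1 by (simp add: pruefer_pow pruefer_one)
    then have "P.ord (\<omega> n) dvd p ^ n" using P.pow_eq_id[OF wC] by blast
    define o' where "o' = P.ord (\<omega> n)"
    have N0: "p ^ n > 0" using p1 by simp
    have ole: "o' \<le> p ^ n" using \<open>P.ord (\<omega> n) dvd p ^ n\<close> N0 o'_def by (simp add: dvd_imp_le)
    have o0: "o' \<noteq> 0"
    proof
      assume "o' = 0" then have "(0::nat) dvd p ^ n" using \<open>P.ord (\<omega> n) dvd p ^ n\<close> o'_def by simp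
      then show False using N0 by simp
    qed
    have "\<omega> n [^]\<^bsub>pruefer_group p\<^esub> o' = \<one>\<^bsub>pruefer_group p\<^esub>" using P.pow_eq_id[OF wC] o'_def by simp
    then have fo: "cis (2 * pi * real o' / real (p ^ n)) = 1" using pw by (simp add: pruefer_pow pruefer_one)
    have "\<not> o' < p ^ n"
    proof
      assume lt: "o' < p ^ n"
      have inj: "inj_on (\<lambda>k. cis (2 * pi * real k / real (p ^ n))) {..<p ^ n}"
        using bij_betw_roots_unity[OF N0] unfolding bij_betw_def by blast
      have "(\<lambda>k. cis (2 * pi * real k / real (p ^ n))) o' = (\<lambda>k. cis (2 * pi * real k / real (p ^ n))) 0"
        using fo by simp
      then have "o' = 0" using inj_onD[OF inj] lt N0 by blast
      then show False using o0 by simp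
    qed
    then show ?thesis using ole o'_def by simp
  qed
  show "\<exists>n (j::nat). z = \<omega> n [^]\<^bsub>pruefer_group p\<^esub> j" if hz: "z \<in> carrier (pruefer_group p)" for z
  proof -
    obtain N where N: "z ^ (p ^ N) = 1" using hz pruefer_carrier by blast
    have "p ^ N > 0" using p1 by simp
    then have "z \<in> (\<lambda>k. cis (2 * pi * real k / real (p ^ N))) ` {..<p ^ N}"
      using bij_betw_roots_unity[of "p ^ N"] N unfolding bij_betw_def by blast
    then obtain k where "z = cis (2 * pi * real k / real (p ^ N))" by blast
    then have "z = \<omega> N [^]\<^bsub>pruefer_group p\<^esub> k" using pw by (simp add: pruefer_pow)
    then show ?thesis by blast
  qed
qed


definition ann_prop :: "('c, 'd) monoid_scheme \<Rightarrow> bool" where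
  "ann_prop H \<longleftrightarrow> (\<forall>x\<in>carrier H. \<forall>y\<in>carrier H.
     (\<forall>n::nat. x [^]\<^bsub>H\<^esub> n = \<one>\<^bsub>H\<^esub> \<longrightarrow> y [^]\<^bsub>H\<^esub> n = \<one>\<^bsub>H\<^esub>) \<longrightarrow> (\<exists>n::nat. y = x [^]\<^bsub>H\<^esub> n))"

lemma ann_transfer:
  assumes G: "group G" and H: "group H" and iso: "G \<cong> H" and A: "ann_prop H"
  shows "ann_prop G"
proof -
  interpret G: group G by (rule G)
  interpret H: group H by (rule H)
  obtain \<phi> where \<phi>: "\<phi> \<in> iso G H" using iso is_iso_def by blast
  have hom: "\<phi> \<in> hom G H" and inj: "inj_on \<phi> (carrier G)" using \<phi> by (auto simp: iso_def bij_betw_def)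
  interpret GH: group_hom G H \<phi> using hom by (unfold_locales) simp
  have one_iff: "\<phi> z = \<one>\<^bsub>H\<^esub> \<longleftrightarrow> z = \<one>\<^bsub>G\<^esub>" if "z \<in> carrier G" for z
  proof
    assume "\<phi> z = \<one>\<^bsub>H\<^esub>"
    then have "\<phi> z = \<phi> \<one>\<^bsub>G\<^esub>" using GH.hom_one by simp
    then show "z = \<one>\<^bsub>G\<^esub>" using inj_onD[OF inj] that G.one_closed by blast
  next
    assume "z = \<one>\<^bsub>G\<^esub>" then show "\<phi> z = \<one>\<^bsub>H\<^esub>" using GH.hom_one by simp
  qed
  show ?thesis unfolding ann_prop_def
  proof (intro ballI impI)
    fix x y assume x: "x \<in> carrier G" and y: "y \<in> carrier G"
      and h: "\<forall>n::nat. x [^]\<^bsub>G\<^esub> n = \<one>\<^bsub>G\<^esub> \<longrightarrow> y [^]\<^bsub>G\<^esub> n = \<one>\<^bsub>G\<^esub>"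
    have "\<forall>n::nat. \<phi> x [^]\<^bsub>H\<^esub> n = \<one>\<^bsub>H\<^esub> \<longrightarrow> \<phi> y [^]\<^bsub>H\<^esub> n = \<one>\<^bsub>H\<^esub>"
    proof (intro allI impI)
      fix n :: nat assume "\<phi> x [^]\<^bsub>H\<^esub> n = \<one>\<^bsub>H\<^esub>"
      then have "\<phi> (x [^]\<^bsub>G\<^esub> n) = \<one>\<^bsub>H\<^esub>" using GH.hom_nat_pow x by simp
      then have "x [^]\<^bsub>G\<^esub> n = \<one>\<^bsub>G\<^esub>" using one_iff x by simp
      then have "y [^]\<^bsub>G\<^esub> n = \<one>\<^bsub>G\<^esub>" using h by blast
      then have "\<phi> (y [^]\<^bsub>G\<^esub> n) = \<one>\<^bsub>H\<^esub>" using GH.hom_one by simp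
      moreover have "\<phi> (y [^]\<^bsub>G\<^esub> n) = \<phi> y [^]\<^bsub>H\<^esub> n" using GH.hom_nat_pow y by blast
      ultimately show "\<phi> y [^]\<^bsub>H\<^esub> n = \<one>\<^bsub>H\<^esub>" by simp
    qed
    moreover have "\<phi> x \<in> carrier H" "\<phi> y \<in> carrier H" using x y hom_in_carrier[OF hom] by auto
    ultimately obtain n :: nat where "\<phi> y = \<phi> x [^]\<^bsub>H\<^esub> n" using A unfolding ann_prop_def by blast
    then have "\<phi> y = \<phi> (x [^]\<^bsub>G\<^esub> n)" using GH.hom_nat_pow x by simp
    then have "y = x [^]\<^bsub>G\<^esub> n" using inj_onD[OF inj] x y by simp
    then show "\<exists>n::nat. y = x [^]\<^bsub>G\<^esub> n" by blast
  qed
qed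

lemma ann_pruefer:
  assumes p1: "p > (1::nat)" shows "ann_prop (pruefer_group p)"
  unfolding ann_prop_def
proof (intro ballI impI)
  interpret P: comm_group "pruefer_group p" using pruefer_comm_group p1 by simp
  fix x y assume x: "x \<in> carrier (pruefer_group p)" and y: "y \<in> carrier (pruefer_group p)"
    and h: "\<forall>n::nat. x [^]\<^bsub>pruefer_group p\<^esub> n = \<one>\<^bsub>pruefer_group p\<^esub> \<longrightarrow> y [^]\<^bsub>pruefer_group p\<^esub> n = \<one>\<^bsub>pruefer_group p\<^esub>"
  obtain a where a: "x ^ (p ^ a) = 1" using x pruefer_carrier by blast
  define N where "N = P.ord x"
  have "x [^]\<^bsub>pruefer_group p\<^esub> (p ^ a) = \<one>\<^bsub>pruefer_group p\<^esub>" using a by (simp add: pruefer_pow pruefer_one)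
  then have Nd: "N dvd p ^ a" using P.pow_eq_id[OF x] N_def by blast
  have N0: "N > 0"
  proof (rule ccontr)
    assume "\<not> N > 0" then have "(0::nat) dvd p ^ a" using Nd by simp
    then show False using p1 by simp
  qed
  have xN: "x ^ N = 1" using P.pow_eq_id[OF x, of N] N_def by (simp add: pruefer_pow pruefer_one)
  have "y [^]\<^bsub>pruefer_group p\<^esub> N = \<one>\<^bsub>pruefer_group p\<^esub>" using h xN by (simp add: pruefer_pow pruefer_one)
  then have yN: "y ^ N = 1" by (simp add: pruefer_pow pruefer_one)
  define S where "S = {z::complex. z ^ N = 1}"
  have Sfin: "finite S" using finite_roots_unity[of N] N0 S_def by simp
  have Scard: "card S = N" using card_roots_unity_eq[OF N0] S_def by simp
  have inj: "inj_on (\<lambda>k. x ^ k) {..<N}"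
  proof (rule inj_onI)
    fix i j assume ij: "i \<in> {..<N}" "j \<in> {..<N}" "x ^ i = x ^ j"
    then have "x [^]\<^bsub>pruefer_group p\<^esub> i = x [^]\<^bsub>pruefer_group p\<^esub> j" by (simp add: pruefer_pow)
    then have "int N dvd int j - int i" using P.npow_eq[OF x] N_def by simp
    then show "i = j" using ij
    proof -
      assume d: "int N dvd int j - int i"
      show "i = j"
      proof (rule ccontr)
        assume "i \<noteq> j" then have "int j - int i \<noteq> 0" by simp
        then have "\<bar>int N\<bar> \<le> \<bar>int j - int i\<bar>" using dvd_imp_le_int d by blast
        then show False using ij by auto
      qed
    qed
  qed
  have sub: "(\<lambda>k. x ^ k) ` {..<N} \<subseteq> S"
  proof
    fix z assume "z \<in> (\<lambda>k. x ^ k) ` {..<N}"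
    then obtain k where "z = x ^ k" by blast
    then have "z ^ N = (x ^ N) ^ k" by (simp add: power_mult[symmetric] mult.commute)
    then show "z \<in> S" using xN S_def by simp
  qed
  have "card ((\<lambda>k. x ^ k) ` {..<N}) = N" using card_image[OF inj] by simp
  then have "(\<lambda>k. x ^ k) ` {..<N} = S" using card_subset_eq[OF Sfin sub] Scard by simp
  then have "y \<in> (\<lambda>k. x ^ k) ` {..<N}" using yN S_def by simp
  then obtain k where "y = x ^ k" by blast
  then have "y = x [^]\<^bsub>pruefer_group p\<^esub> k" by (simp add: pruefer_pow)
  then show "\<exists>n::nat. y = x [^]\<^bsub>pruefer_group p\<^esub> n" by blast
qed


lemma ann_Zmod:
  assumes N0: "N > 0" shows "ann_prop (integer_mod_group N)"
  unfolding ann_prop_def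
proof (intro ballI impI)
  fix x y assume x: "x \<in> carrier (integer_mod_group N)" and y: "y \<in> carrier (integer_mod_group N)"
    and h: "\<forall>n::nat. x [^]\<^bsub>integer_mod_group N\<^esub> n = \<one>\<^bsub>integer_mod_group N\<^esub> \<longrightarrow>
               y [^]\<^bsub>integer_mod_group N\<^esub> n = \<one>\<^bsub>integer_mod_group N\<^esub>"
  have xr: "0 \<le> x" "x < int N" and yr: "0 \<le> y" "y < int N" using x y N0 by (auto simp: carrier_integer_mod_group)
  have h': "\<And>n::nat. (int n * x) mod int N = 0 \<Longrightarrow> (int n * y) mod int N = 0" using h by simp
  define g where "g = gcd x (int N)"
  have g0: "g > 0" using g_def N0 by simp
  have gx: "g dvd x" and gN: "g dvd int N" using g_def by auto
  obtain q where q: "int N = g * q" using gN by (meson dvdE)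
  obtain x' where x': "x = g * x'" using gx by (meson dvdE)
  have "g * q > 0" using q N0 by simp
  then have q0: "q > 0" using g0 by (simp add: zero_less_mult_iff)
  have nq: "int (nat q) = q" using q0 by simp
  have "int (nat q) * x = q * (g * x')" using x' nq by simp
  also have "\<dots> = (g * q) * x'" by (simp only: ac_simps)
  also have "\<dots> = int N * x'" using q by simp
  finally have "(int (nat q) * x) mod int N = 0" by simp
  then have "(int (nat q) * y) mod int N = 0" by (rule h')
  then have "(q * y) mod int N = 0" using nq by simp
  then have "int N dvd q * y" by (simp only: dvd_eq_mod_eq_0)
  moreover have qg: "int N = q * g" using q by (simp only: mult.commute)
  ultimately have "q * g dvd q * y" by simp
  then have "g dvd y" using q0 by (simp only: dvd_mult_cancel_left) simp
  then obtain c where c: "y = g * c" by (meson dvdE)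
  obtain s t where st: "s * x + t * int N = g" using bezout_int g_def by blast
  define n where "n = nat ((c * s) mod int N)"
  have nn: "int n = (c * s) mod int N" using n_def N0 by simp
  have "(int n * x) mod int N = (c * s * x) mod int N" by (simp only: nn mod_mult_left_eq)
  moreover have "c * s * x = y + (- c * t) * int N"
  proof -
    have sx: "s * x = g - t * int N" using st by linarith
    have "c * s * x = c * (s * x)" by (simp only: mult.assoc)
    also have "\<dots> = c * g - c * (t * int N)" using sx by (simp only: right_diff_distrib)
    also have "\<dots> = y + (- c * t) * int N" using c by (simp add: algebra_simps)
    finally show ?thesis .
  qed
  moreover have "(y + (- c * t) * int N) mod int N = y mod int N" by (rule mod_mult_self1)
  moreover have "y mod int N = y" using yr by simp
  ultimately have "y = x [^]\<^bsub>integer_mod_group N\<^esub> n" by simp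
  then show "\<exists>n::nat. y = x [^]\<^bsub>integer_mod_group N\<^esub> n" by blast
qed

context comm_group begin

lemma ann_End_comm:
  assumes A: "ann_prop G" and f: "f \<in> hom G G" and g: "g \<in> hom G G" and x: "x \<in> carrier G"
  shows "f (g x) = g (f x)"
proof -
  have pw: "\<exists>a::nat. h x = x [^] a" if h: "h \<in> hom G G" for h
  proof -
    have "\<forall>n::nat. x [^] n = \<one> \<longrightarrow> h x [^] n = \<one>"
    proof (intro allI impI)
      fix n :: nat assume "x [^] n = \<one>"
      then have "h (x [^] n) = \<one>" using hom_one'[OF h] by simp
      then show "h x [^] n = \<one>" using hom_nat_pow[OF h x is_group is_group] by simp
    qed
    moreover have "h x \<in> carrier G" using hom_in[OF h x] .
    ultimately show ?thesis using A x unfolding ann_prop_def by blast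
  qed
  obtain a :: nat where a: "f x = x [^] a" using pw[OF f] by blast
  obtain b :: nat where b: "g x = x [^] b" using pw[OF g] by blast
  have "f (g x) = f x [^] b" using b hom_nat_pow[OF f x is_group is_group] by simp
  also have "\<dots> = x [^] (a * b)" using a x by (simp add: nat_pow_pow)
  also have "\<dots> = x [^] (b * a)" by (simp add: mult.commute)
  also have "\<dots> = g x [^] a" using b x by (simp add: nat_pow_pow)
  also have "\<dots> = g (f x)" using a hom_nat_pow[OF g x is_group is_group] by simp
  finally show ?thesis .
qed

lemma comm_CE:
  assumes nt: "carrier G \<noteq> {\<one>}"
    and C: "\<And>f g x. f \<in> hom G G \<Longrightarrow> g \<in> hom G G \<Longrightarrow> x \<in> carrier G \<Longrightarrow> f (g x) = g (f x)"
  shows "centrally_essential (End_ring G)"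
  unfolding centrally_essential_def
proof (intro ballI impI)
  fix a assume aE: "a \<in> carrier (End_ring G)" and a0: "a \<noteq> \<zero>\<^bsub>End_ring G\<^esub>"
  have cen: "z \<in> ring_center (End_ring G)" if zE: "z \<in> carrier (End_ring G)" for z
    unfolding ring_center_def
  proof (intro CollectI conjI ballI)
    show "z \<in> carrier (End_ring G)" by (rule zE)
  next
    fix r assume rE: "r \<in> carrier (End_ring G)"
    have zh: "z \<in> hom G G" and rh: "r \<in> hom G G" using zE rE End_carrier by auto
    show "z \<otimes>\<^bsub>End_ring G\<^esub> r = r \<otimes>\<^bsub>End_ring G\<^esub> z"
      unfolding End_mult compose_def using C[OF zh rh] by (intro ext) simp
  qed
  define Xid where "Xid = (\<lambda>x\<in>carrier G. x)"
  have idh: "(\<lambda>x. x) \<in> hom G G" by (simp add: hom_def)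
  have XidE: "Xid \<in> carrier (End_ring G)" unfolding Xid_def using restrict_hom[OF idh] by simp
  obtain w where w: "w \<in> carrier G" "w \<noteq> \<one>" using nt one_closed by blast
  have Xid0: "Xid \<noteq> \<zero>\<^bsub>End_ring G\<^esub>"
  proof
    assume "Xid = \<zero>\<^bsub>End_ring G\<^esub>"
    then have "Xid w = \<one>" using w by (simp add: End_zero)
    then show False using w Xid_def by simp
  qed
  have aext: "a \<in> extensional (carrier G)" using aE End_carrier by blast
  have "a \<otimes>\<^bsub>End_ring G\<^esub> Xid = a"
    unfolding End_mult compose_def Xid_def
  proof (rule ext)
    fix v show "(\<lambda>x\<in>carrier G. a ((\<lambda>x\<in>carrier G. x) x)) v = a v"
      using aext by (cases "v \<in> carrier G") (auto simp: extensional_def)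
  qed
  then show "\<exists>x\<in>ring_center (End_ring G). \<exists>y\<in>ring_center (End_ring G).
       x \<noteq> \<zero>\<^bsub>End_ring G\<^esub> \<and> y \<noteq> \<zero>\<^bsub>End_ring G\<^esub> \<and> a \<otimes>\<^bsub>End_ring G\<^esub> x = y"
    using cen[OF XidE] cen[OF aE] Xid0 a0 by blast
qed

end

theorem lemma2p3:
  fixes p :: nat and G :: "('a, 'b) monoid_scheme"
  assumes "Factorial_Ring.prime p"
    and "comm_group G"
    and "carrier G \<noteq> {\<one>\<^bsub>G\<^esub>}"
    and "\<forall>x \<in> carrier G. \<exists>n::nat. x [^]\<^bsub>G\<^esub> (p ^ n) = \<one>\<^bsub>G\<^esub>"
  shows "centrally_essential (End_ring G) \<longleftrightarrow>
           ((\<exists>k::nat. k > 0 \<and> G \<cong> integer_mod_group (p ^ k)) \<or> G \<cong> pruefer_group p)"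
proof -
  have pg: "pgrp G p"
    by (intro pgrp.intro pgrp_axioms.intro assms(2) assms(1)) (use assms(4) in blast)
  interpret pgrp G p by (rule pg)
  have p1: "p > 1" using p_gt1 .
  show ?thesis
  proof
    assume CE: "centrally_essential (End_ring G)"
    obtain a where a: "a \<in> carrier G" "a [^]\<^bsub>G\<^esub> p = \<one>\<^bsub>G\<^esub>" "a \<noteq> \<one>\<^bsub>G\<^esub>"
      "\<forall>v\<in>carrier G. v [^]\<^bsub>G\<^esub> p = \<one>\<^bsub>G\<^esub> \<longrightarrow> v \<in> cyc a"
      using socle_cyclic[OF CE assms(3)] by blast
    have soc: "\<And>v. v \<in> carrier G \<Longrightarrow> v [^]\<^bsub>G\<^esub> p = \<one>\<^bsub>G\<^esub> \<Longrightarrow> v \<in> cyc a" using a(4) by blast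
    show "(\<exists>k::nat. k > 0 \<and> G \<cong> integer_mod_group (p ^ k)) \<or> G \<cong> pruefer_group p"
    proof (cases "\<exists>N. \<forall>x\<in>carrier G. x [^]\<^bsub>G\<^esub> (p ^ N) = \<one>\<^bsub>G\<^esub>")
      case True
      then show ?thesis using bounded_iso[OF a(1) a(2) soc assms(3)] by blast
    next
      case False
      then have ub: "\<And>N. \<exists>x\<in>carrier G. x [^]\<^bsub>G\<^esub> (p ^ N) \<noteq> \<one>\<^bsub>G\<^esub>" by blast
      obtain ch where ch: "\<forall>n. ch n \<in> carrier G \<and> ord (ch n) = p ^ n \<and> ch (Suc n) [^]\<^bsub>G\<^esub> p = ch n"
        "\<forall>x\<in>carrier G. \<exists>n (j::nat). x = ch n [^]\<^bsub>G\<^esub> j"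
        using unbounded_chain[OF a(1) a(2) soc ub] by blast
      define \<omega> where "\<omega> = (\<lambda>n::nat. cis (2 * pi / real (p ^ n)))"
      have W1: "\<And>n. \<omega> n \<in> carrier (pruefer_group p)" unfolding \<omega>_def by (rule pruefer_chain(1)[OF p1])
      have W2: "\<And>n. \<omega> (Suc n) [^]\<^bsub>pruefer_group p\<^esub> p = \<omega> n" unfolding \<omega>_def by (rule pruefer_chain(2)[OF p1])
      have W3: "\<And>n. group.ord (pruefer_group p) (\<omega> n) = p ^ n" unfolding \<omega>_def by (rule pruefer_chain(3)[OF p1])
      have W4: "\<And>x. x \<in> carrier (pruefer_group p) \<Longrightarrow> \<exists>n (j::nat). x = \<omega> n [^]\<^bsub>pruefer_group p\<^esub> j"
        unfolding \<omega>_def by (rule pruefer_chain(4)[OF p1])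
      have gP: "group (pruefer_group p)" by (rule comm_group.axioms(2)[OF pruefer_comm_group]) (use p1 in simp)
      have cC: "\<And>n. ch n \<in> carrier G" using ch(1) by blast
      have cS: "\<And>n. ch (Suc n) [^]\<^bsub>G\<^esub> p = ch n" using ch(1) by blast
      have cO: "\<And>n. group.ord G (ch n) = p ^ n" using ch(1) by blast
      have cA: "\<And>x. x \<in> carrier G \<Longrightarrow> \<exists>n (j::nat). x = ch n [^]\<^bsub>G\<^esub> j" using ch(2) by blast
      have "G \<cong> pruefer_group p"
      proof (rule chain_iso[where c = ch and d = \<omega> and p = p])
        show "group G" by (rule is_group)
        show "group (pruefer_group p)" by (rule gP)
        show "\<And>n. ch n \<in> carrier G" by (rule cC)
        show "\<And>n. ch (Suc n) [^]\<^bsub>G\<^esub> p = ch n" by (rule cS)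
        show "\<And>n. group.ord G (ch n) = p ^ n" by (rule cO)
        show "\<And>x. x \<in> carrier G \<Longrightarrow> \<exists>n (j::nat). x = ch n [^]\<^bsub>G\<^esub> j" by (rule cA)
        show "\<And>n. \<omega> n \<in> carrier (pruefer_group p)" by (rule W1)
        show "\<And>n. \<omega> (Suc n) [^]\<^bsub>pruefer_group p\<^esub> p = \<omega> n" by (rule W2)
        show "\<And>n. group.ord (pruefer_group p) (\<omega> n) = p ^ n" by (rule W3)
        show "\<And>x. x \<in> carrier (pruefer_group p) \<Longrightarrow> \<exists>n (j::nat). x = \<omega> n [^]\<^bsub>pruefer_group p\<^esub> j" by (rule W4)
      qed
      then show ?thesis by blast
    qed
  next
    assume R: "(\<exists>k::nat. k > 0 \<and> G \<cong> integer_mod_group (p ^ k)) \<or> G \<cong> pruefer_group p"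
    have "ann_prop G"
    proof (cases "\<exists>k::nat. k > 0 \<and> G \<cong> integer_mod_group (p ^ k)")
      case True
      then obtain k where k: "G \<cong> integer_mod_group (p ^ k)" by blast
      have "p ^ k > 0" using p1 by simp
      then show ?thesis by (rule ann_transfer[OF is_group group_integer_mod_group k ann_Zmod])
    next
      case False
      then have iso: "G \<cong> pruefer_group p" using R by blast
      have gP: "group (pruefer_group p)" by (rule comm_group.axioms(2)[OF pruefer_comm_group]) (use p1 in simp)
      show ?thesis by (rule ann_transfer[OF is_group gP iso ann_pruefer[OF p1]])
    qed
    then have AG: "ann_prop G" .
    show "centrally_essential (End_ring G)"
    proof (rule comm_CE[OF assms(3)])
      fix f g x assume "f \<in> hom G G" "g \<in> hom G G" "x \<in> carrier G"
      then show "f (g x) = g (f x)" by (rule ann_End_comm[OF AG])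
    qed
  qed
qed


end
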